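(* For every integer $n\ge 0$: (i) $c_3(5n+1)$ is odd if and only if $10n+2=j(j+1)$ for some integer $j\ge 1$ with $j\equiv 1$ or $3 \pmod 5$; (ii) $c_3(5n+2)$ is odd if and only if $5n+2=(5j+4)(15j+13)$ for some $j\in\mathbb{Z}$; (iii) $c_3(5n+3)$ is odd if and only if $10n+6=(5j+2)(5j+3)$ for some integer $j\ge 0$; (iv) $c_3(5n+4)$ is odd if and only if $5n+4=j(3j+1)$ for some $j\in\mathbb{Z}$ with $j\equiv 1$ or $2\pmod 5$.
   Context: A partition of $n\ge 0$ is a finite multiset of positive integers summing to $n$. For $n\ge 0$, $c_3(n)$ denotes the number of partitions $\lambda$ of $n$ for which there exists an integer $j\ge 1$ such that: the part $1$ appears in $\lambda$ exactly $j^2$ or exactly $j^2+1$ times; every odd part greater than $1$ appears at most once; the even parts of $\lambda$ are distinct; and every even part of $\lambda$ is either at most $2j$, or is a multiple of $4$ that is at least $4j+4$ (in particular no even integer in $\{2j+2,2j+4,\dots,4j+2\}$ is a part). *)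

theory Defs
  imports Main "HOL-Library.Multiset"
begin

definition partitions :: "nat \<Rightarrow> nat multiset set" where
  "partitions n = {l. (\<forall>x\<in>#l. 0 < x) \<and> sum_mset l = n}"

definition c3_cond :: "nat multiset \<Rightarrow> bool" where
  "c3_cond l \<longleftrightarrow> (\<exists>j::nat. j \<ge> 1 \<and>
      (count l 1 = j^2 \<or> count l 1 = j^2 + 1) \<and>
      (\<forall>k. odd k \<and> k > 1 \<longrightarrow> count l k \<le> 1) \<and>
      (\<forall>k. even k \<longrightarrow> count l k \<le> 1) \<and>
      (\<forall>k\<in>#l. even k \<longrightarrow> k \<le> 2 * j \<or> (4 dvd k \<and> k \<ge> 4 * j + 4)))"

definition c3 :: "nat \<Rightarrow> nat" where
  "c3 n = card {l \<in> partitions n. c3_cond l}"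

end

theory Submission
  imports Defs "HOL-Computational_Algebra.Formal_Power_Series" "HOL-Library.Z2"
begin

unbundle fps_syntax


definition eqN :: "nat \<Rightarrow> 'a::comm_ring_1 fps \<Rightarrow> 'a fps \<Rightarrow> bool" where
  "eqN N f g \<longleftrightarrow> (\<forall>i\<le>N. f $ i = g $ i)"

lemma eqN_refl[simp]: "eqN N f f" by (simp add: eqN_def)
lemma eqN_sym: "eqN N f g \<Longrightarrow> eqN N g f" by (simp add: eqN_def)
lemma eqN_trans[trans]: "eqN N f g \<Longrightarrow> eqN N g h \<Longrightarrow> eqN N f h" by (simp add: eqN_def)
lemma eqN_eq_trans[trans]: "f = g \<Longrightarrow> eqN N g h \<Longrightarrow> eqN N f h" by simp
lemma eq_eqN_trans[trans]: "eqN N f g \<Longrightarrow> g = h \<Longrightarrow> eqN N f h" by simp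
lemma eqN_add: "eqN N f f' \<Longrightarrow> eqN N g g' \<Longrightarrow> eqN N (f + g) (f' + g')"
  by (simp add: eqN_def)
lemma eqN_diff: "eqN N f f' \<Longrightarrow> eqN N g g' \<Longrightarrow> eqN N (f - g) (f' - g')"
  by (simp add: eqN_def)
lemma eqN_mult: "eqN N f f' \<Longrightarrow> eqN N g g' \<Longrightarrow> eqN N (f * g) (f' * g')"
  unfolding eqN_def fps_mult_nth by (auto intro!: sum.cong)
lemma eqN_sum: "(\<And>x. x \<in> A \<Longrightarrow> eqN N (f x) (g x)) \<Longrightarrow> eqN N (sum f A) (sum g A)"
  by (simp add: eqN_def fps_sum_nth)
lemma eqN_prod: "(\<And>x. x \<in> A \<Longrightarrow> eqN N (f x) (g x)) \<Longrightarrow> eqN N (prod f A) (prod g A)"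
proof (induction A rule: infinite_finite_induct)
  case (insert x F)
  then show ?case by (simp add: eqN_mult)
qed auto
lemma eqN_power: "eqN N f g \<Longrightarrow> eqN N (f^k) (g^k)"
  by (induction k) (auto simp: eqN_mult)
lemma eqN_Xpow: "N < k \<Longrightarrow> eqN N (fps_X^k * f) 0"
  by (simp add: eqN_def fps_X_power_mult_nth)
lemma eqN_Xpow': "N < k \<Longrightarrow> eqN N (fps_X^k) 0"
  using eqN_Xpow[of N k 1] by simp

lemma eqN_cancel:
  fixes f g h :: "'a::comm_ring_1 fps"
  assumes f0: "f $ 0 = 1" and e: "eqN N (f * g) (f * h)"
  shows "eqN N g h"
proof -
  define d where "d = g - h"
  have e': "\<forall>i\<le>N. (f * d) $ i = 0" using e by (simp add: eqN_def d_def algebra_simps)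
  have "\<forall>i. i \<le> N \<longrightarrow> d $ i = 0"
  proof (rule allI, induct_tac i rule: less_induct)
    fix i assume IH: "\<And>j. j < i \<Longrightarrow> j \<le> N \<longrightarrow> d $ j = 0"
    show "i \<le> N \<longrightarrow> d $ i = 0"
    proof
      assume iN: "i \<le> N"
      have "(f * d) $ i = (\<Sum>k=0..i. f$k * d$(i-k))" by (rule fps_mult_nth)
      also have "\<dots> = f$0 * d$i + (\<Sum>k=1..i. f$k * d$(i-k))"
        by (simp add: sum.atLeast_Suc_atMost)
      also have "(\<Sum>k=1..i. f$k * d$(i-k)) = 0"
        using IH iN by (intro sum.neutral) auto
      finally show "d $ i = 0" using e' iN f0 by simp
    qed
  qed
  then show ?thesis by (simp add: eqN_def d_def)
qed

definition pr :: "nat set \<Rightarrow> 'a::comm_ring_1 fps" where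
  "pr K = (\<Prod>k\<in>K. 1 + fps_X^k)"

lemma pr_cut:
  assumes "finite K"
  shows "eqN N (pr K :: 'a::comm_ring_1 fps) (pr (K \<inter> {..N}))"
proof -
  have split: "K = (K \<inter> {..N}) \<union> (K - {..N})" by auto
  have "pr K = (pr (K \<inter> {..N}) :: 'a fps) * pr (K - {..N})"
    unfolding pr_def using assms by (subst split, subst prod.union_disjoint) auto
  moreover have "eqN N (pr (K - {..N}) :: 'a fps) (\<Prod>k\<in>K-{..N}. 1)"
    unfolding pr_def
  proof (rule eqN_prod)
    fix k assume "k \<in> K - {..N}"
    then have "eqN N (fps_X^k :: 'a fps) 0" by (intro eqN_Xpow') auto
    then show "eqN N (1 + fps_X^k :: 'a fps) 1" using eqN_add[OF eqN_refl] by fastforce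
  qed
  ultimately show ?thesis using eqN_mult[OF eqN_refl] by fastforce
qed


type_synonym bps = "bit fps"

lemma bit_add_self[simp]: "(a::bit) + a = 0" by (cases a) simp_all
lemma bps_add_self[simp]: "(f::bps) + f = 0"
  by (rule fps_ext) (simp only: fps_add_nth bit_add_self fps_zero_nth)
lemma bps_add_self2[simp]: "(f::bps) + (f + g) = g"
  by (metis add.assoc add_0 bps_add_self)
lemma bps_minus: "(f::bps) - g = f + g" by (simp add: fps_eq_iff)
lemma bps_uminus: "- (f::bps) = f" by (simp add: fps_eq_iff)
lemma bps_two[simp]: "(2::bps) = 0"
  by (metis bps_add_self one_add_one)
lemma frob: "((f::bps) + g)^2 = f^2 + g^2"
proof -
  have "(f+g)^2 = f^2 + g^2 + (f*g + f*g)" by (simp add: power2_eq_square algebra_simps)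
  then show ?thesis by simp
qed
lemma frob_sum: "(\<Sum>i\<in>A. (f i :: bps))^2 = (\<Sum>i\<in>A. (f i)^2)"
  by (induction A rule: infinite_finite_induct) (auto simp: frob)

lemma sum_tele_bps: "W 1 + (\<Sum>k=1..n. (W k + W (Suc k) :: bps)) = W (Suc n)"
proof (induction n)
  case (Suc n)
  have "W 1 + (\<Sum>k=1..Suc n. (W k + W (Suc k) :: bps)) = (W 1 + (\<Sum>k=1..n. (W k + W (Suc k) :: bps))) + (W (Suc n) + W (Suc (Suc n)))"
    by (simp add: add.assoc)
  also have "\<dots> = W (Suc (Suc n))" unfolding Suc by (rule bps_add_self2)
  finally show ?case .
qed simp

fun tri :: "nat \<Rightarrow> nat" where
  "tri 0 = 0" | "tri (Suc k) = tri k + Suc k"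

lemma tri_ge: "k \<le> tri k" by (induction k) auto

definition Ap :: "nat \<Rightarrow> nat \<Rightarrow> bps" where
  "Ap n k = pr {k+1..n}"

lemma Ap_Suc: "k \<le> n \<Longrightarrow> Ap (Suc n) k = Ap n k * (1 + fps_X^(Suc n))"
  unfolding Ap_def pr_def by (simp add: atLeastAtMostSuc_conv)
lemma Ap_pred: "1 \<le> k \<Longrightarrow> k \<le> n \<Longrightarrow> Ap n (k-1) = (1 + fps_X^k) * Ap n k"
proof -
  assume "1 \<le> k" "k \<le> n"
  then have "{k-1+1..n} = insert k {k+1..n}" by auto
  then show ?thesis unfolding Ap_def pr_def by simp
qed
lemma Ap_top[simp]: "Ap n n = 1" by (simp add: Ap_def pr_def)

definition Sh :: "nat \<Rightarrow> bps" where
  "Sh n = (\<Sum>k=0..n. fps_X^(n*k + tri k) * Ap n k)"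

lemma Sh_Suc: "Sh (Suc n) = Sh n + fps_X^(n * Suc n + tri (Suc n)) + fps_X^(Suc n * Suc n + tri (Suc n))"
proof -
  define m where "m = Suc n"
  define V where "V k = fps_X^(n*k + tri k) * Ap n k" for k
  define W where "W k = fps_X^(n*k + tri k) * Ap n (k-1)" for k
  define t where "t k = fps_X^(m*k + tri k) * Ap m k" for k
  have tk: "t k = V k + W k + W (Suc k)" if "1 \<le> k" "k \<le> n" for k
  proof -
    have "t k = fps_X^(m*k + tri k) * Ap n k + fps_X^(m*k + tri k) * fps_X^m * Ap n k"
      unfolding t_def using that by (simp add: Ap_Suc m_def algebra_simps)
    also have "fps_X^(m*k + tri k) * fps_X^m * Ap n k = W (Suc k)"
      unfolding W_def by (simp add: m_def power_add[symmetric] algebra_simps)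
    also have "fps_X^(m*k + tri k) * Ap n k = V k + W k"
    proof -
      have "W k = V k + fps_X^(n*k + tri k) * fps_X^k * Ap n k"
        unfolding W_def V_def using Ap_pred[OF that] by (simp add: algebra_simps)
      also have "fps_X^(n*k + tri k) * fps_X^k = (fps_X^(m*k + tri k) :: bps)"
        by (simp add: m_def power_add[symmetric] algebra_simps)
      finally show ?thesis by (simp add: add.assoc)
    qed
    finally show ?thesis .
  qed
  have t0: "t 0 = V 0 + W 1"
    unfolding t_def V_def W_def by (simp add: Ap_Suc m_def algebra_simps)
  have "Sh m = (\<Sum>k=0..n. t k) + t m"
    unfolding Sh_def t_def m_def by simp
  also have "(\<Sum>k=0..n. t k) = t 0 + (\<Sum>k=1..n. t k)"
    by (simp add: sum.atLeast_Suc_atMost)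
  also have "(\<Sum>k=1..n. t k) = (\<Sum>k=1..n. V k) + (\<Sum>k=1..n. W k + W (Suc k))"
    using tk by (simp add: sum.distrib add.assoc)
  also have "t 0 + ((\<Sum>k=1..n. V k) + (\<Sum>k=1..n. W k + W (Suc k)))
      = (V 0 + (\<Sum>k=1..n. V k)) + (W 1 + (\<Sum>k=1..n. W k + W (Suc k)))"
    by (simp add: t0 algebra_simps)
  also have "V 0 + (\<Sum>k=1..n. V k) = Sh n"
    unfolding Sh_def V_def by (simp add: sum.atLeast_Suc_atMost)
  also have "W 1 + (\<Sum>k=1..n. W k + W (Suc k)) = W (Suc n)" by (rule sum_tele_bps)
  also have "W (Suc n) = fps_X^(n * Suc n + tri (Suc n))" unfolding W_def by simp
  also have "t m = fps_X^(Suc n * Suc n + tri (Suc n))" unfolding t_def m_def by simp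
  finally show ?thesis unfolding m_def .
qed

lemma Sh_closed: "Sh n = (\<Sum>j=0..n. fps_X^(j*j + tri j)) + (\<Sum>j=1..n. fps_X^((j-1)*j + tri j))"
proof (induction n)
  case 0 then show ?case by (simp add: Sh_def Ap_def pr_def)
next
  case (Suc n)
  show ?case unfolding Sh_Suc Suc by (simp add: algebra_simps)
qed


lemma Sh_eqN: "N < n \<Longrightarrow> eqN N (pr {1..n} :: bps) (Sh n)"
proof -
  assume Nn: "N < n"
  have "Sh n = Ap n 0 + (\<Sum>k=1..n. fps_X^(n*k + tri k) * Ap n k)"
    unfolding Sh_def by (simp add: sum.atLeast_Suc_atMost)
  moreover have "eqN N (\<Sum>k=1..n. fps_X^(n*k + tri k) * Ap n k) (\<Sum>k=1..n. 0)"
  proof (rule eqN_sum)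
    fix k assume "k \<in> {1..n}"
    then have "n \<le> n*k" by simp
    then have "N < n*k + tri k" using Nn by linarith
    then show "eqN N (fps_X^(n*k + tri k) * Ap n k) 0" by (intro eqN_Xpow)
  qed
  ultimately have "eqN N (Sh n) (Ap n 0)" using eqN_add[OF eqN_refl[of N "Ap n 0"]] by fastforce
  then show ?thesis by (simp add: Ap_def eqN_sym)
qed

definition ev :: "nat \<Rightarrow> nat \<Rightarrow> bps" where
  "ev a b = (\<Prod>m\<in>{a..b}. 1 + fps_X^(2*m))"

lemma ev_empty: "b < a \<Longrightarrow> ev a b = 1" by (simp add: ev_def)
lemma ev_Suc: "a \<le> Suc b \<Longrightarrow> ev a (Suc b) = ev a b * (1 + fps_X^(2*Suc b))"
  unfolding ev_def by (simp add: atLeastAtMostSuc_conv)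
lemma ev_low: "a \<le> b \<Longrightarrow> ev a b = (1 + fps_X^(2*a)) * ev (Suc a) b"
proof -
  assume "a \<le> b"
  then have "{a..b} = insert a {Suc a..b}" by auto
  then show ?thesis unfolding ev_def by simp
qed

definition D :: "nat \<Rightarrow> nat \<Rightarrow> bps" where
  "D n k = (if k \<le> n then ev (k+1) n * ev (n+1-k) n else 0)"

lemma D_Suc0: "D (Suc n) 0 = (1 + fps_X^(2*Suc n)) * D n 0"
  unfolding D_def by (simp add: ev_Suc ev_empty)

lemma D_Suc: assumes "1 \<le> k" "k \<le> Suc n"
  shows "D (Suc n) k = (1 + fps_X^(2*Suc n)) * (D n k + fps_X^(2*(Suc n - k)) * D n (k-1))"
proof (cases "k = Suc n")
  case True
  have "ev 1 (Suc n) = ev 1 n * (1 + fps_X^(2*Suc n))" by (rule ev_Suc) simp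
  with True show ?thesis unfolding D_def by (simp add: ev_empty mult.commute)
next
  case False
  then have kn: "k \<le> n" using assms by simp
  define E1 where "E1 = ev (k+1) n"
  define E2 where "E2 = ev (n+2-k) n"
  define y where "y = (fps_X^(2*Suc n) :: bps)"
  have e1: "ev (k+1) (Suc n) = E1 * (1+y)" unfolding y_def E1_def by (rule ev_Suc) (use kn in simp)
  have e2: "ev (n+2-k) (Suc n) = E2 * (1+y)" unfolding y_def E2_def by (rule ev_Suc) (use assms in simp)
  have "Suc n + 1 - k = n+2-k" by simp
  then have L: "D (Suc n) k = E1 * (1 + y) * (E2 * (1+y))"
    unfolding D_def using assms by (simp only: if_True e1 e2)
  have "n + 1 - k = n + 1 - k" ..
  have a: "ev (n+1-k) n = (1 + fps_X^(2*(Suc n - k))) * E2"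
    unfolding E2_def using kn assms ev_low[of "n+1-k" n]
    by (simp add: Suc_diff_le numeral_2_eq_2)
  have b: "ev (k-1+1) n = (1 + fps_X^(2*k)) * E1"
    unfolding E1_def using kn assms ev_low[of k n] by simp
  have D1: "D n k = E1 * ((1 + fps_X^(2*(Suc n - k))) * E2)"
    unfolding D_def using kn a by (simp add: E1_def)
  have D2: "D n (k-1) = (1 + fps_X^(2*k)) * E1 * E2"
    unfolding D_def using kn assms b
    by (simp add: E2_def Suc_diff_le numeral_2_eq_2)
  have ye: "fps_X^(2*(Suc n - k)) * fps_X^(2*k) = y"
  proof -
    have "2*(Suc n - k) + 2*k = 2*Suc n" using kn by simp
    then show ?thesis unfolding y_def by (simp only: power_add[symmetric])
  qed
  have "(1 + y) * (D n k + fps_X^(2*(Suc n - k)) * D n (k-1))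
      = (1 + y) * E1 * E2 * ((1 + fps_X^(2*(Suc n - k))) + fps_X^(2*(Suc n - k)) * (1 + fps_X^(2*k)))"
    unfolding D1 D2 by (simp add: algebra_simps)
  also have "(1 + fps_X^(2*(Suc n - k))) + fps_X^(2*(Suc n - k)) * (1 + fps_X^(2*k)) = 1 + (y :: bps)"
    using ye by (simp add: algebra_simps)
  finally show ?thesis unfolding L y_def by (simp add: algebra_simps)
qed

lemma E_identity: "(\<Sum>k=0..n. fps_X^(k*k) * D n k) = pr {1..2*n}"
proof (induction n)
  case 0 then show ?case by (simp add: D_def ev_def pr_def)
next
  case (Suc n)
  define y where "y = (fps_X^(2*Suc n) :: bps)"
  have "(\<Sum>k=0..Suc n. fps_X^(k*k) * D (Suc n) k)
      = D (Suc n) 0 + (\<Sum>k=1..Suc n. fps_X^(k*k) * D (Suc n) k)"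
    by (simp add: sum.atLeast_Suc_atMost)
  also have "(\<Sum>k=1..Suc n. fps_X^(k*k) * D (Suc n) k)
     = (1 + y) * ((\<Sum>k=1..Suc n. fps_X^(k*k) * D n k) + (\<Sum>k=1..Suc n. fps_X^(k*k + 2*(Suc n - k)) * D n (k-1)))"
  proof -
    have step: "fps_X^(k*k) * D (Suc n) k = (1+y) * (fps_X^(k*k) * D n k) + (1+y) * (fps_X^(k*k + 2*(Suc n - k)) * D n (k-1))"
      if k: "k \<in> {1..Suc n}" for k
    proof -
      define d where "d = 2*(Suc n - k)"
      have "fps_X^(k*k) * D (Suc n) k = fps_X^(k*k) * ((1+y) * (D n k + fps_X^d * D n (k-1)))"
        using D_Suc k by (simp add: y_def d_def)
      also have "\<dots> = (1+y) * (fps_X^(k*k) * D n k) + (1+y) * (fps_X^(k*k + d) * D n (k-1))"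
        by (simp add: power_add algebra_simps)
      finally show ?thesis by (simp only: d_def)
    qed
    then have "(\<Sum>k=1..Suc n. fps_X^(k*k) * D (Suc n) k) = (\<Sum>k=1..Suc n. (1+y) * (fps_X^(k*k) * D n k) + (1+y) * (fps_X^(k*k + 2*(Suc n - k)) * D n (k-1)))"
      by (rule sum.cong[OF refl])
    also have "\<dots> = (1 + y) * ((\<Sum>k=1..Suc n. fps_X^(k*k) * D n k) + (\<Sum>k=1..Suc n. fps_X^(k*k + 2*(Suc n - k)) * D n (k-1)))"
      by (simp only: sum.distrib sum_distrib_left distrib_left)
    finally show ?thesis .
  qed
  also have "(\<Sum>k=1..Suc n. fps_X^(k*k) * D n k) = (\<Sum>k=1..n. fps_X^(k*k) * D n k)"
    by (simp add: D_def)
  also have "(\<Sum>k=1..Suc n. fps_X^(k*k + 2*(Suc n - k)) * D n (k-1))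
      = (\<Sum>j=0..n. fps_X^(2*n+1) * (fps_X^(j*j) * D n j))"
  proof -
    have "(\<Sum>k=1..Suc n. fps_X^(k*k + 2*(Suc n - k)) * D n (k-1))
        = (\<Sum>j=0..n. fps_X^(Suc j*Suc j + 2*(Suc n - Suc j)) * D n j)"
      by (simp only: One_nat_def sum.shift_bounds_cl_Suc_ivl diff_Suc_Suc minus_nat.diff_0)
    also have "\<dots> = (\<Sum>j=0..n. fps_X^(2*n+1) * (fps_X^(j*j) * D n j))"
    proof (rule sum.cong)
      fix j assume "j \<in> {0..n}"
      then have "Suc j*Suc j + 2*(Suc n - Suc j) = (2*n+1) + j*j" by (simp add: algebra_simps)
      then show "fps_X^(Suc j*Suc j + 2*(Suc n - Suc j)) * D n j = fps_X^(2*n+1) * (fps_X^(j*j) * D n j)"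
        by (simp only: power_add[symmetric] mult.assoc[symmetric])
    qed simp
    finally show ?thesis .
  qed
  also have "(\<Sum>j=0..n. fps_X^(2*n+1) * (fps_X^(j*j) * D n j)) = fps_X^(2*n+1) * pr {1..2*n}"
    by (simp add: sum_distrib_left[symmetric] Suc.IH)
  also have "D (Suc n) 0 = (1 + y) * D n 0" unfolding y_def by (rule D_Suc0)
  finally have eq: "(\<Sum>k=0..Suc n. fps_X^(k*k) * D (Suc n) k)
     = (1 + y) * (D n 0 + (\<Sum>k=1..n. fps_X^(k*k) * D n k) + fps_X^(2*n+1) * pr {1..2*n})"
    by (simp add: algebra_simps)
  have "D n 0 + (\<Sum>k=1..n. fps_X^(k*k) * D n k) = pr {1..2*n}"
    using Suc.IH by (simp add: sum.atLeast_Suc_atMost)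
  then have eq2: "(\<Sum>k=0..Suc n. fps_X^(k*k) * D (Suc n) k) = (1 + y) * ((1 + fps_X^(2*n+1)) * pr {1..2*n})"
    using eq by (simp add: algebra_simps)
  have "pr {1..2*Suc n} = pr {1..2*n} * (1 + fps_X^(2*n+1)) * (1 + (fps_X^(2*Suc n) :: bps))"
    unfolding pr_def by (simp add: atLeastAtMostSuc_conv)
  then show ?case using eq2 unfolding y_def by (simp add: algebra_simps)
qed


type_synonym ips = "int fps"

lemma prod_cut:
  fixes f :: "nat \<Rightarrow> 'a::comm_ring_1 fps"
  assumes "finite K" "\<And>k. k \<in> K \<Longrightarrow> N < k \<Longrightarrow> eqN N (f k) 1"
  shows "eqN N (prod f K) (prod f (K \<inter> {..N}))"
proof -
  have split: "K = (K \<inter> {..N}) \<union> (K - {..N})" by auto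
  have "prod f K = prod f (K \<inter> {..N}) * prod f (K - {..N})"
    using assms(1) by (subst split, subst prod.union_disjoint) auto
  moreover have "eqN N (prod f (K - {..N})) (\<Prod>k\<in>K-{..N}. 1)"
    by (rule eqN_prod) (use assms(2) in auto)
  ultimately show ?thesis using eqN_mult[OF eqN_refl] by fastforce
qed

lemma sum_cut:
  fixes f :: "nat \<Rightarrow> 'a::comm_ring_1 fps"
  assumes "finite K" "\<And>k. k \<in> K \<Longrightarrow> N < k \<Longrightarrow> eqN N (f k) 0"
  shows "eqN N (sum f K) (sum f (K \<inter> {..N}))"
proof -
  have split: "K = (K \<inter> {..N}) \<union> (K - {..N})" by auto
  have "sum f K = sum f (K \<inter> {..N}) + sum f (K - {..N})"
    using assms(1) by (subst split, subst sum.union_disjoint) auto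
  moreover have "eqN N (sum f (K - {..N})) (\<Sum>k\<in>K-{..N}. 0)"
    by (rule eqN_sum) (use assms(2) in auto)
  ultimately show ?thesis using eqN_add[OF eqN_refl] by fastforce
qed

lemma one_plus_cut: "N < k \<Longrightarrow> eqN N (1 + fps_X^k :: 'a::comm_ring_1 fps) 1"
  using eqN_add[OF eqN_refl eqN_Xpow'] by fastforce
lemma one_minus_cut: "N < k \<Longrightarrow> eqN N (1 - fps_X^k :: 'a::comm_ring_1 fps) 1"
  using eqN_diff[OF eqN_refl eqN_Xpow'] by fastforce

definition qp :: "nat \<Rightarrow> ips" where
  "qp m = (\<Prod>i\<in>{1..m}. 1 - fps_X^i)"

lemma qp_0[simp]: "qp 0 = 1" by (simp add: qp_def)
lemma qp_Suc: "qp (Suc m) = qp m * (1 - fps_X^(Suc m))"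
  unfolding qp_def by (simp add: atLeastAtMostSuc_conv)
lemma qp_nth0: "qp m $ 0 = 1"
  by (induction m) (simp_all add: qp_Suc)
lemma qp_nz: "qp m \<noteq> 0"
  using qp_nth0[of m] by auto
lemma qp_cut: "N \<le> m \<Longrightarrow> eqN N (qp m) (qp N)"
proof -
  assume "N \<le> m"
  then have "{1..m} \<inter> {..N} = {1..N}" by auto
  then show ?thesis unfolding qp_def using prod_cut[of "{1..m}" N "\<lambda>i. 1 - fps_X^i"] one_minus_cut
    by force
qed

fun gb :: "nat \<Rightarrow> nat \<Rightarrow> ips" where
  "gb 0 k = (if k = 0 then 1 else 0)"
| "gb (Suc n) k = (if k = 0 then 1 else gb n (k-1) + fps_X^k * gb n k)"

lemma gb_zero: "n < k \<Longrightarrow> gb n k = 0"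
  by (induction n arbitrary: k) auto

lemma gb_0[simp]: "gb n 0 = 1" by (cases n) auto

lemma gb_diag: "gb n n = 1"
  by (induction n) (auto simp: gb_zero)

lemma gb_prod: "k \<le> n \<Longrightarrow> gb n k * qp k * qp (n-k) = qp n"
proof (induction n arbitrary: k)
  case 0 then show ?case by simp
next
  case (Suc n k)
  show ?case
  proof (cases "k = 0")
    case True then show ?thesis by simp
  next
    case k0: False
    show ?thesis
    proof (cases "k = Suc n")
      case True
      then show ?thesis using gb_diag[of "Suc n"] by simp
    next
      case False
      then have kn: "k \<le> n" using Suc.prems by simp
      obtain j where j: "k = Suc j" using k0 by (cases k) auto
      have jn: "j \<le> n" using kn j by simp
      have A: "gb n j * qp k * qp (Suc n - k) = qp n * (1 - fps_X^k)"
      proof -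
        have "Suc n - k = n - j" using j by simp
        then have "gb n j * qp k * qp (Suc n - k) = (gb n j * qp j * qp (n - j)) * (1 - fps_X^k)"
          using j by (simp add: qp_Suc algebra_simps)
        then show ?thesis using Suc.IH[OF jn] by simp
      qed
      have B: "fps_X^k * gb n k * qp k * qp (Suc n - k) = qp n * (fps_X^k - fps_X^(Suc n))"
      proof -
        have e: "Suc n - k = Suc (n - k)" using kn by simp
        have "fps_X^k * gb n k * qp k * qp (Suc n - k)
            = (gb n k * qp k * qp (n - k)) * (fps_X^k - fps_X^k * fps_X^(Suc (n-k)))"
          unfolding e by (simp add: qp_Suc algebra_simps)
        also have "fps_X^k * fps_X^(Suc (n-k)) = (fps_X^(Suc n) :: ips)"
          using kn by (simp add: power_add[symmetric])
        finally show ?thesis using Suc.IH[OF kn] by simp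
      qed
      have "gb (Suc n) k * qp k * qp (Suc n - k)
          = gb n j * qp k * qp (Suc n - k) + fps_X^k * gb n k * qp k * qp (Suc n - k)"
        using j by (simp add: algebra_simps)
      also have "\<dots> = qp n * (1 - fps_X^(Suc n))" unfolding A B by (simp add: algebra_simps)
      finally show ?thesis by (simp add: qp_Suc)
    qed
  qed
qed

lemma gb_rec2:
  assumes "1 \<le> k" "k \<le> Suc n"
  shows "gb (Suc n) k = gb n k + fps_X^(Suc n - k) * gb n (k-1)"
proof (cases "k = Suc n")
  case True
  then show ?thesis by (simp add: gb_zero)
next
  case False
  then have kn: "k \<le> n" using assms by simp
  obtain j where j: "k = Suc j" using assms by (cases k) auto
  have jn: "j \<le> n" using kn j by simp
  define c where "c = qp k * qp (Suc n - k)"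
  have c0: "c \<noteq> 0" unfolding c_def using qp_nz by simp
  have e: "Suc n - k = Suc (n - k)" using kn by simp
  have L: "gb (Suc n) k * c = qp (Suc n)"
    unfolding c_def using gb_prod[of k "Suc n"] assms by (simp add: mult.assoc)
  have R1: "gb n k * c = qp n * (1 - fps_X^(Suc n - k))"
    unfolding c_def e using gb_prod[OF kn] by (simp add: qp_Suc algebra_simps)
  have R2: "fps_X^(Suc n - k) * gb n j * c = qp n * (fps_X^(Suc n - k) - fps_X^(Suc n))"
  proof -
    have e2: "Suc n - k = n - j" using j by simp
    have "fps_X^(Suc n - k) * gb n j * c = (gb n j * qp j * qp (n - j)) * (fps_X^(Suc n - k) - fps_X^(Suc n - k) * fps_X^k)"
      unfolding c_def using j e2 by (simp add: qp_Suc algebra_simps)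
    also have "fps_X^(Suc n - k) * fps_X^k = (fps_X^(Suc n) :: ips)"
      using kn by (simp add: power_add[symmetric])
    finally show ?thesis using gb_prod[OF jn] by simp
  qed
  have "(gb n k + fps_X^(Suc n - k) * gb n (k-1)) * c = qp (Suc n)"
    using R1 R2 j by (simp add: algebra_simps qp_Suc)
  then show ?thesis using L c0 by (metis mult_right_cancel)
qed


definition ee :: "nat \<Rightarrow> nat \<Rightarrow> nat" where
  "ee a m = (if m \<le> a then tri (a-m) else tri (m-a-1))"

lemma ee_step: "j \<le> a + b \<Longrightarrow> (a+b-j) + ee a (Suc j) = b + ee a j"
proof -
  assume jab: "j \<le> a + b"
  consider "j < a" | "j = a" | "a < j" by linarith
  then show ?thesis
  proof cases
    case 1
    then have "a - j = Suc (a - Suc j)" by simp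
    then have "tri (a - j) = tri (a - Suc j) + (a - j)" by simp
    then show ?thesis using 1 jab by (simp add: ee_def)
  next
    case 2 then show ?thesis by (simp add: ee_def)
  next
    case 3
    then have "Suc j - a - 1 = Suc (j - a - 1)" by simp
    then have "tri (Suc j - a - 1) = tri (j - a - 1) + (j - a)" using 3 by simp
    then show ?thesis using 3 jab by (simp add: ee_def)
  qed
qed

lemma ee_step0: "j < a \<Longrightarrow> Suc j + tri (a - j) = Suc a + ee a (Suc j)"
proof -
  assume "j < a"
  then have "a - j = Suc (a - Suc j)" by simp
  then have "tri (a - j) = tri (a - Suc j) + (a - j)" by simp
  then show ?thesis using \<open>j < a\<close> by (simp add: ee_def)
qed

lemma L_b0: "(\<Prod>j\<in>{1..a}. 1 + fps_X^j :: ips) = (\<Sum>m=0..a. gb a m * fps_X^(ee a m))"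
proof (induction a)
  case 0 then show ?case by (simp add: ee_def)
next
  case (Suc a)
  define S where "S = (\<Sum>m=0..a. gb a m * fps_X^(ee a m))"
  have "(\<Sum>m=0..Suc a. gb (Suc a) m * fps_X^(ee (Suc a) m))
      = fps_X^(tri (Suc a)) + (\<Sum>j=0..a. gb (Suc a) (Suc j) * fps_X^(ee (Suc a) (Suc j)))"
    by (simp only: sum.atLeast0_atMost_Suc_shift gb_0 mult_1_left o_def) (simp add: ee_def del: gb.simps tri.simps)
  also have "(\<Sum>j=0..a. gb (Suc a) (Suc j) * fps_X^(ee (Suc a) (Suc j)))
      = (\<Sum>j=0..a. gb a j * fps_X^(ee a j)) + (\<Sum>j=0..a. fps_X^(Suc a) * (gb a (Suc j) * fps_X^(ee a (Suc j))))"
  proof -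
    have "gb (Suc a) (Suc j) * fps_X^(ee (Suc a) (Suc j)) = gb a j * fps_X^(ee a j) + fps_X^(Suc a) * (gb a (Suc j) * fps_X^(ee a (Suc j)))"
      if "j \<in> {0..a}" for j
    proof (cases "j = a")
      case True then show ?thesis by (simp add: gb_zero ee_def)
    next
      case False
      then have ja: "j < a" using that by simp
      have "ee (Suc a) (Suc j) = ee a j" using ja by (simp add: ee_def)
      moreover have "fps_X^(Suc j) * fps_X^(tri (a-j)) = (fps_X^(Suc a) * fps_X^(ee a (Suc j)) :: ips)"
        using ee_step0[OF ja] by (simp only: power_add[symmetric])
      moreover have "ee a j = tri (a - j)" using ja by (simp add: ee_def)
      ultimately show ?thesis by (simp add: algebra_simps)
    qed
    then show ?thesis by (simp add: sum.distrib)
  qed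
  also have "(\<Sum>j=0..a. gb a j * fps_X^(ee a j)) = S" by (simp add: S_def)
  also have "fps_X^(tri (Suc a)) + (S + (\<Sum>j=0..a. fps_X^(Suc a) * (gb a (Suc j) * fps_X^(ee a (Suc j)))))
      = S + fps_X^(Suc a) * (fps_X^(ee a 0) + (\<Sum>j=0..a. gb a (Suc j) * fps_X^(ee a (Suc j))))"
    by (simp add: ee_def sum_distrib_left algebra_simps power_add)
  also have "fps_X^(ee a 0) + (\<Sum>j=0..a. gb a (Suc j) * fps_X^(ee a (Suc j))) = (\<Sum>m=0..Suc a. gb a m * fps_X^(ee a m))"
    by (simp only: sum.atLeast0_atMost_Suc_shift gb_0 mult_1_left o_def)
  also have "\<dots> = S" by (simp add: S_def gb_zero)
  finally have "(\<Sum>m=0..Suc a. gb (Suc a) m * fps_X^(ee (Suc a) m)) = S * (1 + fps_X^(Suc a))"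
    by (simp add: algebra_simps)
  then show ?case using Suc.IH by (simp add: S_def atLeastAtMostSuc_conv)
qed

lemma L_ab: "(\<Prod>j\<in>{1..a}. 1 + fps_X^j :: ips) * (\<Prod>i\<in>{0..<b}. 1 + fps_X^i)
   = (\<Sum>m=0..a+b. gb (a+b) m * fps_X^(ee a m))"
proof (induction b)
  case 0 then show ?case using L_b0 by simp
next
  case (Suc b)
  define M where "M = a + b"
  define S where "S = (\<Sum>m=0..M. gb M m * fps_X^(ee a m))"
  have "(\<Sum>m=0..a + Suc b. gb (a + Suc b) m * fps_X^(ee a m))
      = fps_X^(ee a 0) + (\<Sum>j=0..M. gb (Suc M) (Suc j) * fps_X^(ee a (Suc j)))"
    unfolding M_def add_Suc_right by (simp only: sum.atLeast0_atMost_Suc_shift gb_0 mult_1_left o_def)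
  also have "(\<Sum>j=0..M. gb (Suc M) (Suc j) * fps_X^(ee a (Suc j)))
      = (\<Sum>j=0..M. gb M (Suc j) * fps_X^(ee a (Suc j))) + (\<Sum>j=0..M. fps_X^b * (gb M j * fps_X^(ee a j)))"
  proof -
    have "gb (Suc M) (Suc j) * fps_X^(ee a (Suc j)) = gb M (Suc j) * fps_X^(ee a (Suc j)) + fps_X^b * (gb M j * fps_X^(ee a j))"
      if "j \<in> {0..M}" for j
    proof -
      have jM: "j \<le> M" using that by simp
      have "gb (Suc M) (Suc j) = gb M (Suc j) + fps_X^(M - j) * gb M j"
        using gb_rec2[of "Suc j" M] jM by simp
      moreover have "fps_X^(M - j) * fps_X^(ee a (Suc j)) = (fps_X^b * fps_X^(ee a j) :: ips)"
        using ee_step[of j a b] jM unfolding M_def by (simp only: power_add[symmetric])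
      ultimately show ?thesis by (simp add: algebra_simps)
    qed
    then show ?thesis by (simp add: sum.distrib)
  qed
  also have "fps_X^(ee a 0) + ((\<Sum>j=0..M. gb M (Suc j) * fps_X^(ee a (Suc j))) + (\<Sum>j=0..M. fps_X^b * (gb M j * fps_X^(ee a j))))
     = (fps_X^(ee a 0) + (\<Sum>j=0..M. gb M (Suc j) * fps_X^(ee a (Suc j)))) + (\<Sum>j=0..M. fps_X^b * (gb M j * fps_X^(ee a j)))"
    by (simp only: add.assoc)
  also have "fps_X^(ee a 0) + (\<Sum>j=0..M. gb M (Suc j) * fps_X^(ee a (Suc j))) = (\<Sum>m=0..Suc M. gb M m * fps_X^(ee a m))"
    by (simp only: sum.atLeast0_atMost_Suc_shift gb_0 mult_1_left o_def)
  also have "\<dots> = S" by (simp add: S_def gb_zero)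
  also have "(\<Sum>j=0..M. fps_X^b * (gb M j * fps_X^(ee a j))) = fps_X^b * S"
    by (simp only: S_def sum_distrib_left)
  also have "S + fps_X^b * S = S * (1 + fps_X^b)" by (simp add: algebra_simps)
  finally have "(\<Sum>m=0..a + Suc b. gb (a + Suc b) m * fps_X^(ee a m)) = S * (1 + fps_X^b)" .
  then show ?case using Suc.IH by (simp add: S_def M_def algebra_simps)
qed


lemma gb_Q:
  assumes "N < m" "N < M - m" "m \<le> M"
  shows "eqN N (gb M m * qp N) 1"
proof (rule eqN_cancel[OF qp_nth0[of N]])
  have c1: "eqN N (qp m) (qp N)" using assms by (intro qp_cut) simp
  have c2: "eqN N (qp (M - m)) (qp N)" using assms by (intro qp_cut) simp
  have "eqN N (gb M m * qp m * qp (M - m)) (gb M m * qp N * qp N)"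
    by (rule eqN_mult[OF eqN_mult[OF eqN_refl c1] c2])
  moreover have "gb M m * qp m * qp (M - m) = qp M" using gb_prod assms by simp
  moreover have "eqN N (qp M) (qp N)" using assms by (intro qp_cut) simp
  ultimately have h: "eqN N (gb M m * qp N * qp N) (qp N)"
    using eqN_trans eqN_sym by metis
  have eq: "qp N * (gb M m * qp N) = gb M m * qp N * qp N" by (simp only: mult.commute mult.left_commute mult.assoc)
  show "eqN N (qp N * (gb M m * qp N)) (qp N * 1)" unfolding eq mult_1_right by (rule h)
qed

lemma eqN_cancel2:
  fixes f g :: ips
  assumes "eqN N (2 * f) (2 * g)" shows "eqN N f g"
proof -
  have "\<forall>i\<le>N. (f + f) $ i = (g + g) $ i" using assms by (simp only: eqN_def mult_2)
  then have "\<forall>i\<le>N. f $ i + f $ i = g $ i + g $ i" by (simp only: fps_add_nth)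
  then show ?thesis unfolding eqN_def by (auto dest: spec)
qed

lemma tri_sum_cut: "N \<le> K \<Longrightarrow> eqN N (\<Sum>t=0..K. fps_X^(tri t) :: 'a::comm_ring_1 fps) (\<Sum>t=0..N. fps_X^(tri t))"
proof -
  assume NK: "N \<le> K"
  have "{0..K} \<inter> {..N} = {0..N}" using NK by auto
  moreover have "eqN N (\<Sum>t=0..K. fps_X^(tri t) :: 'a fps) (\<Sum>t\<in>{0..K}\<inter>{..N}. fps_X^(tri t))"
  proof (rule sum_cut)
    fix k assume "N < k"
    then have "N < tri k" using tri_ge[of k] by linarith
    then show "eqN N (fps_X^(tri k) :: 'a fps) 0" by (rule eqN_Xpow')
  qed simp
  ultimately show ?thesis by simp
qed

lemma gauss_int: "eqN N (pr {1..N} * pr {1..N} * qp N :: ips) (\<Sum>t=0..N. fps_X^(tri t))"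
proof -
  define n where "n = Suc (Suc (2*N))"
  define Q where "Q = qp N"
  have Lab: "(\<Prod>j\<in>{1..n}. 1 + fps_X^j :: ips) * (\<Prod>i\<in>{0..<n}. 1 + fps_X^i)
     = (\<Sum>m=0..n+n. gb (n+n) m * fps_X^(ee n m))" by (rule L_ab)
  have "{0..<n} = insert 0 {1..<n}" unfolding n_def by auto
  then have P0: "(\<Prod>i\<in>{0..<n}. 1 + fps_X^i :: ips) = 2 * pr {1..<n}"
    unfolding pr_def by simp
  have c1: "eqN N (pr {1..n} :: ips) (pr {1..N})"
  proof -
    have eq: "{1..n} \<inter> {..N} = {1..N}" unfolding n_def by auto
    show ?thesis using pr_cut[OF finite_atLeastAtMost, of N 1 n, unfolded eq] .
  qed
  have c2: "eqN N (pr {1..<n} :: ips) (pr {1..N})"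
  proof -
    have eq: "{1..<n} \<inter> {..N} = {1..N}" unfolding n_def by auto
    show ?thesis using pr_cut[OF finite_atLeastLessThan, of N 1 n, unfolded eq] .
  qed
  have LHS: "eqN N ((\<Prod>j\<in>{1..n}. 1 + fps_X^j :: ips) * (\<Prod>i\<in>{0..<n}. 1 + fps_X^i) * Q)
       (2 * (pr {1..N} * pr {1..N} * Q))"
  proof -
    have "(\<Prod>j\<in>{1..n}. 1 + fps_X^j :: ips) * (\<Prod>i\<in>{0..<n}. 1 + fps_X^i) * Q
        = 2 * (pr {1..n} * pr {1..<n} * Q)" unfolding P0 by (simp add: pr_def algebra_simps)
    also have "eqN N \<dots> (2 * (pr {1..N} * pr {1..N} * Q))"
      by (intro eqN_mult eqN_refl c1 c2)
    finally show ?thesis .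
  qed
  have trm: "eqN N (gb (n+n) m * fps_X^(ee n m) * Q) (fps_X^(ee n m))" if "m \<in> {0..n+n}" for m
  proof (cases "N < ee n m")
    case True
    then have "eqN N (fps_X^(ee n m) * (gb (n+n) m * Q)) 0" by (rule eqN_Xpow)
    moreover have "eqN N (fps_X^(ee n m) :: ips) 0" using True by (rule eqN_Xpow')
    moreover have "gb (n+n) m * fps_X^(ee n m) * Q = fps_X^(ee n m) * (gb (n+n) m * Q)"
      by (simp add: algebra_simps)
    ultimately show ?thesis using eqN_trans eqN_sym by metis
  next
    case False
    have m1: "N < m"
    proof (rule ccontr)
      assume "\<not> N < m"
      then have "m \<le> n" "N < n - m" unfolding n_def by linarith+
      then have "N < ee n m" using tri_ge[of "n - m"] by (simp add: ee_def)
      then show False using False by simp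
    qed
    have m2: "N < n + n - m"
    proof (rule ccontr)
      assume a: "\<not> N < n + n - m"
      have "m \<le> n + n" using that by simp
      then have "n < m" "N < m - n - 1" using a unfolding n_def by linarith+
      then have "N < ee n m" using tri_ge[of "m - n - 1"] by (simp add: ee_def)
      then show False using False by simp
    qed
    have "eqN N (fps_X^(ee n m) * (gb (n+n) m * Q)) (fps_X^(ee n m) * 1)"
      unfolding Q_def using m1 m2 that by (intro eqN_mult[OF eqN_refl] gb_Q) simp_all
    then show ?thesis by (simp add: algebra_simps)
  qed
  have RHS: "eqN N ((\<Sum>m=0..n+n. gb (n+n) m * fps_X^(ee n m)) * Q) (\<Sum>m=0..n+n. fps_X^(ee n m))"
    unfolding sum_distrib_right by (rule eqN_sum) (rule trm)
  have split: "(\<Sum>m=0..n+n. fps_X^(ee n m) :: ips) = (\<Sum>m=0..n. fps_X^(ee n m)) + (\<Sum>m=n+1..n+n. fps_X^(ee n m))"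
    by (rule sum.ub_add_nat) simp
  have s1: "(\<Sum>m=0..n. fps_X^(ee n m) :: ips) = (\<Sum>t=0..n. fps_X^(tri t))"
  proof -
    have "(\<Sum>m=0..n. fps_X^(ee n m) :: ips) = (\<Sum>m=0..n. fps_X^(tri (n - m)))"
      by (rule sum.cong) (auto simp: ee_def)
    also have "\<dots> = (\<Sum>t=0..n. fps_X^(tri t))"
      by (subst sum.atLeastAtMost_rev) simp
    finally show ?thesis .
  qed
  have s2: "(\<Sum>m=n+1..n+n. fps_X^(ee n m) :: ips) = (\<Sum>t=0..n-1. fps_X^(tri t))"
  proof -
    have "(\<Sum>m=n+1..n+n. fps_X^(ee n m) :: ips) = (\<Sum>m=0+(n+1)..(n-1)+(n+1). fps_X^(ee n m))"
      unfolding n_def by simp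
    also have "\<dots> = (\<Sum>t=0..n-1. fps_X^(ee n (t + (n+1))))"
      by (rule sum.shift_bounds_cl_nat_ivl)
    also have "\<dots> = (\<Sum>t=0..n-1. fps_X^(tri t))"
      by (rule sum.cong) (auto simp: ee_def)
    finally show ?thesis .
  qed
  have T: "eqN N (\<Sum>m=0..n+n. fps_X^(ee n m) :: ips) (2 * (\<Sum>t=0..N. fps_X^(tri t)))"
  proof -
    have "eqN N ((\<Sum>t=0..n. fps_X^(tri t)) + (\<Sum>t=0..n-1. fps_X^(tri t)) :: ips)
           ((\<Sum>t=0..N. fps_X^(tri t)) + (\<Sum>t=0..N. fps_X^(tri t)))"
      by (intro eqN_add tri_sum_cut) (simp_all add: n_def)
    then show ?thesis by (simp only: split s1 s2 mult_2)
  qed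
  have "eqN N (2 * (pr {1..N} * pr {1..N} * Q)) (2 * (\<Sum>t=0..N. fps_X^(tri t)))"
    using eqN_trans[OF eqN_sym[OF LHS], unfolded Lab, OF eqN_trans[OF RHS T]] .
  then show ?thesis unfolding Q_def by (rule eqN_cancel2)
qed


definition hb :: "ips \<Rightarrow> bps" where
  "hb f = Abs_fps (\<lambda>n. of_int (f $ n))"

lemma hb_nth[simp]: "hb f $ n = of_int (f $ n)" by (simp add: hb_def)
lemma hb_add: "hb (f + g) = hb f + hb g" by (rule fps_ext) simp
lemma hb_diff: "hb (f - g) = hb f - hb g" by (rule fps_ext) simp
lemma hb_one: "hb 1 = 1" by (rule fps_ext) simp
lemma hb_zero: "hb 0 = 0" by (rule fps_ext) simp
lemma hb_mult: "hb (f * g) = hb f * hb g"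
  by (rule fps_ext) (simp add: fps_mult_nth)
lemma hb_Xp: "hb (fps_X^k) = fps_X^k" by (rule fps_ext) simp
lemma hb_prod: "hb (prod f A) = (\<Prod>a\<in>A. hb (f a))"
  by (induction A rule: infinite_finite_induct) (simp_all add: hb_one hb_mult)
lemma hb_sum: "hb (sum f A) = (\<Sum>a\<in>A. hb (f a))"
  by (induction A rule: infinite_finite_induct) (simp_all add: hb_add hb_zero)
lemma hb_eqN: "eqN N f g \<Longrightarrow> eqN N (hb f) (hb g)" by (simp add: eqN_def)
lemma hb_pr: "hb (pr K) = pr K"
  unfolding pr_def hb_prod by (simp add: hb_add hb_one hb_Xp)
lemma hb_qp: "hb (qp m) = pr {1..m}"
  unfolding qp_def pr_def hb_prod by (simp add: hb_diff hb_one hb_Xp bps_minus)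

lemma gauss_bit: "eqN N (pr {1..N} * pr {1..N} * pr {1..N} :: bps) (\<Sum>t=0..N. fps_X^(tri t))"
  using hb_eqN[OF gauss_int[of N]] by (simp add: hb_mult hb_pr hb_qp hb_sum hb_Xp)


lemma pr_coeff:
  assumes "finite K" "0 \<notin> K"
  shows "(pr K :: 'a::comm_ring_1 fps) $ n = of_nat (card {A. A \<subseteq> K \<and> \<Sum>A = n})"
  using assms
proof (induction K arbitrary: n rule: finite_induct)
  case empty
  have "{A. A \<subseteq> {} \<and> \<Sum>A = n} = (if n = 0 then {{}} else {})" by auto
  then show ?case by (simp add: pr_def)
next
  case (insert k K n)
  have k0: "0 < k" using insert.prems by auto
  have IH: "\<And>m. (pr K :: 'a fps) $ m = of_nat (card {A. A \<subseteq> K \<and> \<Sum>A = m})"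
    using insert.IH insert.prems by auto
  define S1 where "S1 = {A. A \<subseteq> K \<and> \<Sum>A = n}"
  define S2 where "S2 = {B. B \<subseteq> K \<and> \<Sum>B = n - k \<and> k \<le> n}"
  have fin1: "finite S1" unfolding S1_def using insert.hyps(1)
    by (rule finite_subset[rotated, OF finite_Pow_iff[THEN iffD2]]) auto
  have fin2: "finite S2" unfolding S2_def using insert.hyps(1)
    by (rule finite_subset[rotated, OF finite_Pow_iff[THEN iffD2]]) auto
  have split: "{A. A \<subseteq> insert k K \<and> \<Sum>A = n} = S1 \<union> insert k ` S2"
  proof (intro set_eqI iffI)
    fix A assume "A \<in> {A. A \<subseteq> insert k K \<and> \<Sum>A = n}"
    then have A: "A \<subseteq> insert k K" "\<Sum>A = n" by auto
    have finA: "finite A" using A(1) insert.hyps(1) finite_subset by blast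
    show "A \<in> S1 \<union> insert k ` S2"
    proof (cases "k \<in> A")
      case True
      define B where "B = A - {k}"
      have "A = insert k B" using True B_def by auto
      moreover have "\<Sum>A = k + \<Sum>B" using True finA B_def by (simp add: sum.remove)
      moreover have "B \<subseteq> K" using A(1) B_def by auto
      ultimately show ?thesis using A(2) unfolding S2_def by auto
    next
      case False then show ?thesis using A unfolding S1_def by auto
    qed
  next
    fix A assume "A \<in> S1 \<union> insert k ` S2"
    then show "A \<in> {A. A \<subseteq> insert k K \<and> \<Sum>A = n}"
    proof
      assume "A \<in> S1" then show ?thesis unfolding S1_def by auto
    next
      assume "A \<in> insert k ` S2"
      then obtain B where B: "B \<subseteq> K" "\<Sum>B = n - k" "k \<le> n" "A = insert k B" unfolding S2_def by auto
      have "finite B" using B(1) insert.hyps(1) finite_subset by blast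
      moreover have "k \<notin> B" using B(1) insert.hyps(2) by auto
      ultimately have "\<Sum>A = k + (n - k)" using B by simp
      then show ?thesis using B by auto
    qed
  qed
  have disj: "S1 \<inter> insert k ` S2 = {}" unfolding S1_def using insert.hyps(2) by auto
  have inj: "inj_on (insert k) S2"
    unfolding S2_def inj_on_def using insert.hyps(2) by auto
  have "card {A. A \<subseteq> insert k K \<and> \<Sum>A = n} = card S1 + card S2"
    unfolding split using fin1 fin2 disj inj by (simp add: card_Un_disjoint card_image)
  moreover have "(pr (insert k K) :: 'a fps) $ n = pr K $ n + (fps_X^k * pr K) $ n"
    unfolding pr_def using insert.hyps by (simp add: algebra_simps)
  moreover have "(fps_X^k * (pr K :: 'a fps)) $ n = of_nat (card S2)"
  proof (cases "k \<le> n")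
    case True then show ?thesis by (simp add: fps_X_power_mult_nth IH S2_def)
  next
    case False then have "S2 = {}" by (auto simp: S2_def)
    then show ?thesis using False by (simp add: fps_X_power_mult_nth)
  qed
  ultimately show ?case by (simp add: IH S1_def)
qed


definition Sj :: "nat \<Rightarrow> nat set" where
  "Sj j = {k. odd k \<and> 3 \<le> k} \<union> {k. even k \<and> 2 \<le> k \<and> k \<le> 2*j} \<union> {k. 4 dvd k \<and> 4*j+4 \<le> k}"

definition T :: "nat \<Rightarrow> nat \<Rightarrow> nat \<Rightarrow> nat set set" where
  "T n j q = {A. A \<subseteq> Sj j \<inter> {..n} \<and> \<Sum>A + q = n}"

definition phi :: "nat \<Rightarrow> nat set \<Rightarrow> nat multiset" where
  "phi q A = replicate_mset q 1 + mset_set A"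

lemma Sj_ge2: "k \<in> Sj j \<Longrightarrow> 2 \<le> k"
  unfolding Sj_def by auto

lemma T_fin: "finite (T n j q)"
  unfolding T_def by (rule finite_subset[of _ "Pow {..n}"]) auto

lemma phi_count1: "A \<in> T n j q \<Longrightarrow> count (phi q A) 1 = q"
proof -
  assume "A \<in> T n j q"
  then have "1 \<notin> A" "finite A" unfolding T_def using Sj_ge2 finite_subset by fastforce+
  then show ?thesis by (simp add: phi_def)
qed

lemma phi_inj: "inj_on (phi q) (T n j q)"
proof (rule inj_onI)
  fix A B assume A: "A \<in> T n j q" and B: "B \<in> T n j q" and e: "phi q A = phi q B"
  have "finite A" "finite B" using A B unfolding T_def using finite_subset by fastforce+
  moreover have "mset_set A = mset_set B" using e by (simp add: phi_def)
  ultimately show "A = B" by simp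
qed

lemma sq_sep:
  fixes j j' q :: nat
  assumes "1 \<le> j" "1 \<le> j'" "q = j^2 \<or> q = j^2 + 1" "q = j'^2 \<or> q = j'^2 + 1"
  shows "j = j'"
proof (rule ccontr)
  have gen: "False" if "1 \<le> a" "a < b" "q = a^2 \<or> q = a^2 + 1" "q = b^2 \<or> q = b^2 + 1" for a b :: nat
  proof -
    have "(a+1)^2 \<le> b^2" using that(2) by (intro power_mono) auto
    moreover have "(a+1)^2 = a^2 + 2*a + 1" by (simp add: power2_eq_square algebra_simps)
    moreover have "b^2 \<le> q" "q \<le> a^2 + 1" using that(3,4) by auto
    ultimately show False using that(1) by linarith
  qed
  assume "j \<noteq> j'"
  then consider "j < j'" | "j' < j" by linarith
  then show False
  proof cases
    case 1 then show False using gen[of j j'] assms by blast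
  next
    case 2 then show False using gen[of j' j] assms by blast
  qed
qed

lemma sum_mset_mset_set: "sum_mset (mset_set A) = (\<Sum>A :: nat)"
  using sum_unfold_sum_mset[of "\<lambda>x. x" A] by simp

lemma mem_le_sum_mset: "x \<in># (l::nat multiset) \<Longrightarrow> x \<le> sum_mset l"
  by (induction l) auto

lemma c3_union:
  "{l \<in> partitions n. c3_cond l} = (\<Union>j\<in>{1..n}. phi (j^2) ` T n j (j^2) \<union> phi (j^2+1) ` T n j (j^2+1))"
proof (intro set_eqI iffI)
  fix l assume "l \<in> {l \<in> partitions n. c3_cond l}"
  then have pos: "\<forall>x\<in>#l. 0 < x" and sl: "sum_mset l = n" and c: "c3_cond l"
    unfolding partitions_def by auto
  from c obtain j where j1: "j \<ge> 1" and q: "count l 1 = j^2 \<or> count l 1 = j^2 + 1"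
    and odd1: "\<forall>k. odd k \<and> k > 1 \<longrightarrow> count l k \<le> 1"
    and ev1: "\<forall>k. even k \<longrightarrow> count l k \<le> 1"
    and evc: "\<forall>k\<in>#l. even k \<longrightarrow> k \<le> 2 * j \<or> (4 dvd k \<and> k \<ge> 4 * j + 4)"
    unfolding c3_cond_def by blast
  define A where "A = set_mset l - {1}"
  have finA: "finite A" unfolding A_def by simp
  have le1: "count l x \<le> 1" if "x \<noteq> 1" for x
  proof (cases "even x")
    case True then show ?thesis using ev1 by blast
  next
    case False
    then have "x > 1" using that by presburger
    then show ?thesis using odd1 False by blast
  qed
  have leq: "l = phi (count l 1) A"
  proof (rule multiset_eqI)
    fix x
    show "count l x = count (phi (count l 1) A) x"
    proof (cases "x = 1")
      case True then show ?thesis by (simp add: phi_def A_def)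
    next
      case False
      then have "count l x \<le> 1" by (rule le1)
      then show ?thesis using False finA by (cases "count l x") (auto simp: phi_def A_def count_mset_set' not_in_iff)
    qed
  qed
  have sumA: "sum_mset l = count l 1 + \<Sum>A"
    by (subst leq, simp add: phi_def sum_mset_mset_set)
  have AS: "A \<subseteq> Sj j \<inter> {..n}"
  proof
    fix x assume xA: "x \<in> A"
    then have xl: "x \<in># l" and x1: "x \<noteq> 1" unfolding A_def by auto
    have x0: "0 < x" using pos xl by auto
    have "x \<le> n" using mem_le_sum_mset[OF xl] sl by simp
    moreover have "x \<in> Sj j"
    proof (cases "even x")
      case True
      then have "2 \<le> x" using x0 by presburger
      then show ?thesis using evc xl True unfolding Sj_def by auto
    next
      case False
      then have "3 \<le> x" using x0 x1 by presburger
      then show ?thesis using False unfolding Sj_def by auto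
    qed
    ultimately show "x \<in> Sj j \<inter> {..n}" by auto
  qed
  have jn: "j \<le> n"
  proof -
    have "j \<le> j^2" by (simp add: power2_eq_square)
    also have "\<dots> \<le> count l 1" using q by auto
    also have "\<dots> \<le> n" using sumA sl by simp
    finally show ?thesis .
  qed
  have AT: "A \<in> T n j (count l 1)" unfolding T_def using AS sumA sl by simp
  have "l \<in> phi (j^2) ` T n j (j^2) \<union> phi (j^2+1) ` T n j (j^2+1)"
  proof (cases "count l 1 = j^2")
    case True
    then have "l \<in> phi (j^2) ` T n j (j^2)" using AT leq by (metis image_eqI)
    then show ?thesis by blast
  next
    case False
    then have "count l 1 = j^2+1" using q by blast
    then have "l \<in> phi (j^2+1) ` T n j (j^2+1)" using AT leq by (metis image_eqI)
    then show ?thesis by blast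
  qed
  moreover have "j \<in> {1..n}" using j1 jn by simp
  ultimately show "l \<in> (\<Union>j\<in>{1..n}. phi (j^2) ` T n j (j^2) \<union> phi (j^2+1) ` T n j (j^2+1))"
    by blast
next
  fix l assume "l \<in> (\<Union>j\<in>{1..n}. phi (j^2) ` T n j (j^2) \<union> phi (j^2+1) ` T n j (j^2+1))"
  then obtain j where jn: "j \<in> {1..n}" and lj: "l \<in> phi (j^2) ` T n j (j^2) \<union> phi (j^2+1) ` T n j (j^2+1)"
    by blast
  have "\<exists>q A. (q = j^2 \<or> q = j^2+1) \<and> A \<in> T n j q \<and> l = phi q A"
    using lj by blast
  then obtain q A where q: "q = j^2 \<or> q = j^2+1" and AT: "A \<in> T n j q"
    and l: "l = phi q A" by blast
  have j1: "1 \<le> j" using jn by simp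
  have AS: "A \<subseteq> Sj j" and sA: "\<Sum>A + q = n" using AT unfolding T_def by auto
  have finA: "finite A" using AT unfolding T_def using finite_subset by fastforce
  have c1: "count l 1 = q" using phi_count1[OF AT] l by simp
  have cnt: "count l k = (if k \<in> A then 1 else 0)" if "k \<noteq> 1" for k
    using that finA l by (simp add: phi_def count_mset_set')
  have mem: "k \<in> A" if "k \<in># l" "k \<noteq> 1" for k :: nat
  proof -
    have "count l k \<noteq> 0" using that(1) by simp
    then show ?thesis using cnt[OF that(2)] by (simp split: if_splits)
  qed
  have part: "l \<in> partitions n"
    unfolding partitions_def
  proof (intro CollectI conjI ballI)
    fix x assume "x \<in># l"
    show "0 < x"
    proof (cases "x = 1")
      case False
      then have "x \<in> Sj j" using mem[OF \<open>x \<in># l\<close>] AS by blast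
      then show ?thesis using Sj_ge2 by fastforce
    qed simp
  next
    show "sum_mset l = n" using sA l finA by (simp add: phi_def sum_mset_mset_set)
  qed
  have "c3_cond l"
    unfolding c3_cond_def
  proof (intro exI[of _ j] conjI allI impI ballI)
    show "1 \<le> j" by (rule j1)
    show "count l 1 = j^2 \<or> count l 1 = j^2 + 1" using c1 q by simp
  next
    fix k :: nat assume "odd k \<and> k > 1"
    then have "k \<noteq> 1" by simp
    from cnt[OF this] show "count l k \<le> 1" by simp
  next
    fix k :: nat assume "even k" then have "k \<noteq> 1" by auto
    from cnt[OF this] show "count l k \<le> 1" by simp
  next
    fix k assume kl: "k \<in># l" and ek: "even k"
    then have "k \<noteq> 1" by auto
    then have "k \<in> A" using mem kl by blast
    then have "k \<in> Sj j" using AS by auto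
    then show "k \<le> 2 * j \<or> (4 dvd k \<and> k \<ge> 4 * j + 4)" using ek unfolding Sj_def by auto
  qed
  then show "l \<in> {l \<in> partitions n. c3_cond l}" using part by simp
qed

lemma c3_sum: "c3 n = (\<Sum>j=1..n. card (T n j (j^2)) + card (T n j (j^2+1)))"
proof -
  have cnt1: "count l 1 = q" if "l \<in> phi q ` T n j q" for l q j
    using that phi_count1 by blast
  have disj_o: "phi (j^2) ` T n j (j^2) \<inter> phi (j^2+1) ` T n j (j^2+1) = {}" for j
  proof (rule ccontr)
    assume "\<not> ?thesis"
    then obtain l where "l \<in> phi (j^2) ` T n j (j^2)" "l \<in> phi (j^2+1) ` T n j (j^2+1)" by blast
    then have "count l 1 = j^2" "count l 1 = j^2+1" using cnt1 by blast+
    then show False by simp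
  qed
  have card_j: "card (phi (j^2) ` T n j (j^2) \<union> phi (j^2+1) ` T n j (j^2+1)) = card (T n j (j^2)) + card (T n j (j^2+1))" for j
    using disj_o[of j] by (simp add: card_Un_disjoint T_fin card_image phi_inj)
  have disj: "(phi (i^2) ` T n i (i^2) \<union> phi (i^2+1) ` T n i (i^2+1)) \<inter> (phi (j^2) ` T n j (j^2) \<union> phi (j^2+1) ` T n j (j^2+1)) = {}"
    if "i \<in> {1..n}" "j \<in> {1..n}" "i \<noteq> j" for i j
  proof (rule ccontr)
    assume "\<not> ?thesis"
    then obtain l where l1: "l \<in> phi (i^2) ` T n i (i^2) \<union> phi (i^2+1) ` T n i (i^2+1)"
      and l2: "l \<in> phi (j^2) ` T n j (j^2) \<union> phi (j^2+1) ` T n j (j^2+1)" by blast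
    have "count l 1 = i^2 \<or> count l 1 = i^2 + 1" using l1 cnt1 by blast
    moreover have "count l 1 = j^2 \<or> count l 1 = j^2 + 1" using l2 cnt1 by blast
    ultimately have "i = j" using that by (intro sq_sep[of i j "count l 1"]) auto
    then show False using that by simp
  qed
  have "c3 n = card (\<Union>j\<in>{1..n}. phi (j^2) ` T n j (j^2) \<union> phi (j^2+1) ` T n j (j^2+1))"
    unfolding c3_def c3_union ..
  also have "\<dots> = (\<Sum>j=1..n. card (phi (j^2) ` T n j (j^2) \<union> phi (j^2+1) ` T n j (j^2+1)))"
    apply (rule card_UN_disjoint)
      apply simp
     apply (simp add: T_fin)
    using disj by blast
  also have "\<dots> = (\<Sum>j=1..n. card (T n j (j^2)) + card (T n j (j^2+1)))"
    using card_j by simp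
  finally show ?thesis .
qed


lemma Sj_fin: "finite (Sj j \<inter> {..m})" by simp
lemma Sj_0: "0 \<notin> Sj j \<inter> {..m}" using Sj_ge2 by fastforce

lemma card_T: "(of_nat (card (T m j a)) :: bit) = (fps_X^a * pr (Sj j \<inter> {..m}) :: bps) $ m"
proof (cases "a \<le> m")
  case True
  have "T m j a = {A. A \<subseteq> Sj j \<inter> {..m} \<and> \<Sum>A = m - a}"
    unfolding T_def using True by auto
  then show ?thesis using True pr_coeff[where 'a=bit, OF Sj_fin[of j m] Sj_0[of j m], of "m - a"]
    by (simp add: fps_X_power_mult_nth)
next
  case False
  then have "T m j a = {}" unfolding T_def by auto
  then show ?thesis using False by (simp add: fps_X_power_mult_nth)
qed

lemma c3_coeff: "(of_nat (c3 m) :: bit) = (\<Sum>j=1..m. (fps_X^(j^2) + fps_X^(j^2+1)) * pr (Sj j \<inter> {..m}) :: bps) $ m"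
  unfolding c3_sum of_nat_sum of_nat_add card_T fps_sum_nth
  by (simp add: algebra_simps)

lemma pr_union: "finite A \<Longrightarrow> finite B \<Longrightarrow> A \<inter> B = {} \<Longrightarrow> pr (A \<union> B) = pr A * pr B"
  unfolding pr_def by (rule prod.union_disjoint)

lemma pr_image: "inj_on f I \<Longrightarrow> pr (f ` I) = (\<Prod>i\<in>I. 1 + fps_X^(f i))"
  unfolding pr_def by (simp add: prod.reindex)

definition Odd3 :: "nat \<Rightarrow> nat set" where "Odd3 B = {k. odd k \<and> 3 \<le> k \<and> k \<le> B}"

lemma Sj_split:
  assumes "j \<le> M"
  shows "Sj j \<inter> {..4*M} = Odd3 (4*M) \<union> ((\<lambda>i. 2*i) ` {1..j} \<union> (\<lambda>i. 4*i) ` {j+1..M})"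
proof (intro set_eqI iffI)
  fix k assume k: "k \<in> Sj j \<inter> {..4*M}"
  then have kB: "k \<le> 4*M" by simp
  consider "odd k \<and> 3 \<le> k" | "even k \<and> 2 \<le> k \<and> k \<le> 2*j" | "4 dvd k \<and> 4*j+4 \<le> k"
    using k unfolding Sj_def by blast
  then show "k \<in> Odd3 (4*M) \<union> ((\<lambda>i. 2*i) ` {1..j} \<union> (\<lambda>i. 4*i) ` {j+1..M})"
  proof cases
    case 1 then show ?thesis using kB unfolding Odd3_def by blast
  next
    case 2
    then have "k = 2 * (k div 2)" "k div 2 \<in> {1..j}" by auto
    then show ?thesis by blast
  next
    case 3
    then have "k = 4 * (k div 4)" "k div 4 \<in> {j+1..M}" using kB by auto
    then show ?thesis by blast
  qed
next
  fix k assume "k \<in> Odd3 (4*M) \<union> ((\<lambda>i. 2*i) ` {1..j} \<union> (\<lambda>i. 4*i) ` {j+1..M})"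
  then consider "k \<in> Odd3 (4*M)" | i where "i \<in> {1..j}" "k = 2*i" | i where "i \<in> {j+1..M}" "k = 4*i"
    by blast
  then show "k \<in> Sj j \<inter> {..4*M}"
  proof cases
    case 1 then show ?thesis unfolding Odd3_def Sj_def by auto
  next
    case 2 then show ?thesis using assms unfolding Sj_def by auto
  next
    case 3 then show ?thesis using assms unfolding Sj_def by auto
  qed
qed


lemma one_X_sq: "(1 + fps_X^i :: bps)^2 = 1 + fps_X^(2*i)"
  by (simp add: frob power_mult[symmetric] mult.commute)

lemma ev_sq: "ev a b = (pr {a..b} :: bps)^2"
  unfolding ev_def pr_def prod_power_distrib one_X_sq ..

lemma ev4_sq: "(\<Prod>i\<in>{a..b}. 1 + fps_X^(4*i) :: bps) = (ev a b)^2"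
proof -
  have "(1 + fps_X^(2*i) :: bps)^2 = 1 + fps_X^(4*i)" for i
    using one_X_sq[of "2*i"] by simp
  then show ?thesis unfolding ev_def prod_power_distrib by simp
qed

lemma ev_split: "j \<le> M \<Longrightarrow> ev 1 M = ev 1 j * ev (j+1) M"
proof -
  assume "j \<le> M"
  then have "{1..M} = {1..j} \<union> {j+1..M}" by auto
  then show ?thesis unfolding ev_def by (simp add: prod.union_disjoint[symmetric] ivl_disj_int_two)
qed

definition Odd1 :: "nat \<Rightarrow> nat set" where "Odd1 B = {k. odd k \<and> k \<le> B}"

lemma Odd1_Odd3: "1 \<le> B \<Longrightarrow> pr (Odd1 B) = (1 + fps_X) * (pr (Odd3 B) :: bps)"
proof -
  assume "1 \<le> B"
  then have "Odd1 B = insert 1 (Odd3 B)" unfolding Odd1_def Odd3_def by auto presburger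
  moreover have "1 \<notin> Odd3 B" "finite (Odd3 B)" unfolding Odd3_def by auto
  ultimately show ?thesis unfolding pr_def by simp
qed

lemma pr_Sj:
  assumes "1 \<le> j" "j \<le> M"
  shows "(fps_X^(j^2) + fps_X^(j^2+1)) * pr (Sj j \<inter> {..4*M}) = fps_X^(j^2) * (pr (Odd1 (4*M)) * ev 1 M) * ev (j+1) M"
proof -
  have fin: "finite (Odd3 (4*M))" unfolding Odd3_def by auto
  have d1: "Odd3 (4*M) \<inter> ((\<lambda>i. 2*i) ` {1..j} \<union> (\<lambda>i. 4*i) ` {j+1..M}) = {}"
    unfolding Odd3_def by auto
  have d2: "(\<lambda>i. 2*i) ` {1..j} \<inter> (\<lambda>i. 4*i) ` {j+1..M} = {}" by auto
  have "pr (Sj j \<inter> {..4*M}) = (pr (Odd3 (4*M)) :: bps) * (pr ((\<lambda>i. 2*i) ` {1..j}) * pr ((\<lambda>i. 4*i) ` {j+1..M}))"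
    unfolding Sj_split[OF assms(2)] using fin d1 d2 by (simp add: pr_union)
  also have "pr ((\<lambda>i. 2*i) ` {1..j}) = ev 1 j"
    unfolding ev_def by (subst pr_image) (auto simp: inj_on_def)
  also have "pr ((\<lambda>i. 4*i) ` {j+1..M}) = (ev (j+1) M)^2"
    by (subst pr_image) (auto simp: inj_on_def ev4_sq)
  finally have e: "pr (Sj j \<inter> {..4*M}) = pr (Odd3 (4*M)) * (ev 1 j * (ev (j+1) M)^2)" .
  have o: "pr (Odd1 (4*M)) = (1 + fps_X) * (pr (Odd3 (4*M)) :: bps)" using assms by (intro Odd1_Odd3) simp
  have "fps_X^(j^2) + fps_X^(j^2+1) = fps_X^(j^2) * (1 + fps_X :: bps)" by (simp add: algebra_simps)
  then show ?thesis unfolding e ev_split[OF assms(2)] o by (simp add: power2_eq_square algebra_simps)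
qed


lemma ev_cut1: "N < 2*a \<Longrightarrow> eqN N (ev a b) 1"
proof -
  assume a: "N < 2*a"
  have "eqN N (ev a b) (\<Prod>i\<in>{a..b}. 1)" unfolding ev_def
  proof (rule eqN_prod)
    fix i assume "i \<in> {a..b}"
    then have "N < 2*i" using a by auto
    then show "eqN N (1 + fps_X^(2*i)) 1" by (rule one_plus_cut)
  qed
  then show ?thesis by simp
qed

lemma E_cut:
  assumes M: "M = 2*m+2"
  shows "eqN m (\<Sum>k=0..m. fps_X^(k^2) * ev (k+1) M) (pr {1..2*M})"
proof -
  have h1: "eqN m (\<Sum>k=0..M. fps_X^(k*k) * D M k) (\<Sum>k\<in>{0..M}\<inter>{..m}. fps_X^(k*k) * D M k)"
  proof (rule sum_cut)
    fix k assume "k \<in> {0..M}" "m < k"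
    moreover have "k \<le> k*k" by (simp add: le_square)
    ultimately have "m < k*k" by linarith
    then show "eqN m (fps_X^(k*k) * D M k) 0" by (rule eqN_Xpow)
  qed simp
  have se: "{0..M}\<inter>{..m} = {0..m}" using M by auto
  have h2: "eqN m (\<Sum>k=0..m. fps_X^(k*k) * D M k) (\<Sum>k=0..m. fps_X^(k^2) * ev (k+1) M)"
  proof (rule eqN_sum)
    fix k assume k: "k \<in> {0..m}"
    have "D M k = ev (k+1) M * ev (M+1-k) M" using k M by (simp add: D_def)
    moreover have e1: "eqN m (ev (M+1-k) M) 1" using k M by (intro ev_cut1) auto
    ultimately have "eqN m (fps_X^(k*k) * D M k) (fps_X^(k*k) * (ev (k+1) M * 1))"
      using eqN_mult[OF eqN_refl[of m "fps_X^(k*k)"] eqN_mult[OF eqN_refl[of m "ev (k+1) M"] e1]] by simp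
    then show "eqN m (fps_X^(k*k) * D M k) (fps_X^(k^2) * ev (k+1) M)"
      by (simp add: power2_eq_square)
  qed
  show ?thesis using eqN_sym[OF eqN_trans[OF h1[unfolded se] h2]] unfolding E_identity .
qed

lemma G_eq:
  assumes M: "M = 2*m+2"
  shows "eqN m (\<Sum>j=1..m. (fps_X^(j^2) + fps_X^(j^2+1)) * pr (Sj j \<inter> {..m}) :: bps)
      ((pr (Odd1 (4*M)) * ev 1 M) * (\<Sum>j=1..m. fps_X^(j^2) * ev (j+1) M))"
proof -
  have "eqN m (\<Sum>j=1..m. (fps_X^(j^2) + fps_X^(j^2+1)) * pr (Sj j \<inter> {..m}) :: bps)
       (\<Sum>j=1..m. fps_X^(j^2) * (pr (Odd1 (4*M)) * ev 1 M) * ev (j+1) M)"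
  proof (rule eqN_sum)
    fix j assume j: "j \<in> {1..m}"
    have "(Sj j \<inter> {..4*M}) \<inter> {..m} = Sj j \<inter> {..m}" using M by auto
    then have cut: "eqN m (pr (Sj j \<inter> {..4*M}) :: bps) (pr (Sj j \<inter> {..m}))"
      using pr_cut[of "Sj j \<inter> {..4*M}" m] by simp
    have "eqN m ((fps_X^(j^2) + fps_X^(j^2+1)) * pr (Sj j \<inter> {..m}) :: bps)
        ((fps_X^(j^2) + fps_X^(j^2+1)) * pr (Sj j \<inter> {..4*M}))"
      by (rule eqN_mult[OF eqN_refl eqN_sym[OF cut]])
    also have "(fps_X^(j^2) + fps_X^(j^2+1)) * pr (Sj j \<inter> {..4*M}) = fps_X^(j^2) * (pr (Odd1 (4*M)) * ev 1 M) * ev (j+1) M"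
      using j M by (intro pr_Sj) auto
    finally show "eqN m ((fps_X^(j^2) + fps_X^(j^2+1)) * pr (Sj j \<inter> {..m}) :: bps) (fps_X^(j^2) * (pr (Odd1 (4*M)) * ev 1 M) * ev (j+1) M)" .
  qed
  also have "(\<Sum>j=1..m. fps_X^(j^2) * (pr (Odd1 (4*M)) * ev 1 M) * ev (j+1) M) = (pr (Odd1 (4*M)) * ev 1 M) * (\<Sum>j=1..m. fps_X^(j^2) * ev (j+1) M)"
    by (simp add: sum_distrib_left algebra_simps)
  finally show ?thesis .
qed


lemma pr_cut_eq: "finite K \<Longrightarrow> K \<inter> {..N} = L \<Longrightarrow> eqN N (pr K :: 'a::comm_ring_1 fps) (pr L)"
  using pr_cut[of K N] by simp

lemma coeff_sumX:
  assumes "inj_on f J" "finite J"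
  shows "(\<Sum>j\<in>J. fps_X^(f j) :: bps) $ m = (if \<exists>j\<in>J. f j = m then 1 else 0)"
proof (cases "\<exists>j\<in>J. f j = m")
  case True
  then obtain j0 where j0: "j0 \<in> J" "f j0 = m" by blast
  have "(\<Sum>j\<in>J. fps_X^(f j) :: bps) $ m = (\<Sum>j\<in>J. if j = j0 then 1 else 0)"
    unfolding fps_sum_nth using assms(1) j0 by (intro sum.cong) (auto simp: inj_on_def)
  then show ?thesis using True j0 assms(2) by simp
next
  case False
  then show ?thesis unfolding fps_sum_nth by (auto intro!: sum.neutral)
qed

lemma incr_inj: "(\<And>j. (f::nat\<Rightarrow>nat) j < f (Suc j)) \<Longrightarrow> inj_on f A"
  using strict_mono_Suc_iff[of f] strict_mono_eq[of f] by (auto simp: inj_on_def)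

lemma tri_Suc_gt: "tri j < tri (Suc j)" by simp

lemma Odd_ev_cut:
  assumes M: "M = 2*m+2"
  shows "eqN m (pr (Odd1 (4*M)) * ev 1 M) (pr {1..m})"
proof -
  have ev: "ev 1 M = pr ((\<lambda>i. 2*i) ` {1..M})"
    unfolding ev_def by (subst pr_image) (auto simp: inj_on_def)
  have d: "Odd1 (4*M) \<inter> (\<lambda>i. 2*i) ` {1..M} = {}" unfolding Odd1_def by auto
  have fin: "finite (Odd1 (4*M))" unfolding Odd1_def by auto
  have u: "pr (Odd1 (4*M)) * ev 1 M = pr (Odd1 (4*M) \<union> (\<lambda>i. 2*i) ` {1..M})"
    unfolding ev using d fin by (simp add: pr_union)
  have s: "(Odd1 (4*M) \<union> (\<lambda>i. 2*i) ` {1..M}) \<inter> {..m} = {1..m}"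
  proof (intro set_eqI iffI)
    fix k assume "k \<in> (Odd1 (4*M) \<union> (\<lambda>i. 2*i) ` {1..M}) \<inter> {..m}"
    then show "k \<in> {1..m}" unfolding Odd1_def by (auto elim: oddE)
  next
    fix k assume k: "k \<in> {1..m}"
    show "k \<in> (Odd1 (4*M) \<union> (\<lambda>i. 2*i) ` {1..M}) \<inter> {..m}"
    proof (cases "odd k")
      case True then show ?thesis using k M unfolding Odd1_def by auto
    next
      case False
      then have "k = 2 * (k div 2)" "k div 2 \<in> {1..M}" using k M by auto
      then have "k \<in> (\<lambda>i. 2*i) ` {1..M}" by (rule image_eqI)
      then show ?thesis using k by simp
    qed
  qed
  show ?thesis unfolding u using fin s by (intro pr_cut_eq) auto
qed

lemma Sh_sq: "(Sh n)^2 = (\<Sum>j=0..n. fps_X^(2*(j*j + tri j))) + (\<Sum>j=1..n. fps_X^(2*((j-1)*j + tri j)))"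
proof -
  have sq: "(fps_X^e :: bps)^2 = fps_X^(2*e)" for e by (simp add: power_mult[symmetric] mult.commute)
  show ?thesis unfolding Sh_closed frob frob_sum sq ..
qed

lemma main_coeff:
  "(of_nat (c3 m) :: bit) = ((\<Sum>j=0..m+1. fps_X^(2*(j*j + tri j))) + (\<Sum>j=1..m+1. fps_X^(2*((j-1)*j + tri j)))
      + (\<Sum>t=0..m. fps_X^(tri t)) :: bps) $ m"
proof -
  define M where "M = 2*m+2"
  define P where "P = (pr {1..m} :: bps)"
  define W where "W = (pr (Odd1 (4*M)) * ev 1 M :: bps)"
  define S1 where "S1 = (\<Sum>j=1..m. fps_X^(j^2) * ev (j+1) M :: bps)"
  define S0 where "S0 = (\<Sum>j=0..m. fps_X^(j^2) * ev (j+1) M :: bps)"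
  have S0S1: "S0 = ev 1 M + S1" unfolding S0_def S1_def by (simp add: sum.atLeast_Suc_atMost)
  have S1S0: "S1 = S0 + ev 1 M" unfolding S0S1 by (simp add: algebra_simps)
  have hS0: "eqN m S0 P"
  proof -
    have "eqN m S0 (pr {1..2*M})" unfolding S0_def by (rule E_cut) (simp add: M_def)
    moreover have "eqN m (pr {1..2*M} :: bps) P"
    proof -
      have "{1..2*M} \<inter> {..m} = {1..m}" by (auto simp: M_def)
      then show ?thesis unfolding P_def by (intro pr_cut_eq) auto
    qed
    ultimately show ?thesis by (rule eqN_trans)
  qed
  have cutM: "eqN m (pr {1..M} :: bps) P"
  proof -
    have "{1..M} \<inter> {..m} = {1..m}" by (auto simp: M_def)
    then show ?thesis unfolding P_def by (intro pr_cut_eq) auto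
  qed
  have hev: "eqN m (ev 1 M) (P^2)" unfolding ev_sq by (rule eqN_power[OF cutM])
  have hW: "eqN m W P" unfolding W_def P_def by (rule Odd_ev_cut) (simp add: M_def)
  have hG: "eqN m (\<Sum>j=1..m. (fps_X^(j^2) + fps_X^(j^2+1)) * pr (Sj j \<inter> {..m}) :: bps) (W * S1)"
    unfolding W_def S1_def by (rule G_eq) (simp add: M_def)
  have h1: "eqN m (W * S1) (P * (P + P^2))"
    unfolding S1S0 by (rule eqN_mult[OF hW eqN_add[OF hS0 hev]])
  have hP: "eqN m P (Sh (m+1))"
  proof -
    have "{1..m+1} \<inter> {..m} = {1..m}" by auto
    then have "eqN m (pr {1..m+1} :: bps) P" unfolding P_def by (intro pr_cut_eq) auto
    moreover have "eqN m (pr {1..m+1}) (Sh (m+1))" by (rule Sh_eqN) simp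
    ultimately show ?thesis using eqN_trans eqN_sym by blast
  qed
  have h2: "eqN m (P * P) ((Sh (m+1))^2)" unfolding power2_eq_square by (rule eqN_mult[OF hP hP])
  have h3: "eqN m (P * P * P) (\<Sum>t=0..m. fps_X^(tri t))" unfolding P_def by (rule gauss_bit)
  have "P * (P + P^2) = P * P + P * P * P" by (simp add: algebra_simps power2_eq_square)
  then have h4: "eqN m (P * (P + P^2)) ((Sh (m+1))^2 + (\<Sum>t=0..m. fps_X^(tri t)))"
    using eqN_add[OF h2 h3] by simp
  have "eqN m (\<Sum>j=1..m. (fps_X^(j^2) + fps_X^(j^2+1)) * pr (Sj j \<inter> {..m}) :: bps)
      ((Sh (m+1))^2 + (\<Sum>t=0..m. fps_X^(tri t)))"
    using eqN_trans[OF hG eqN_trans[OF h1 h4]] .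
  then have "(\<Sum>j=1..m. (fps_X^(j^2) + fps_X^(j^2+1)) * pr (Sj j \<inter> {..m}) :: bps) $ m
      = ((Sh (m+1))^2 + (\<Sum>t=0..m. fps_X^(tri t))) $ m" unfolding eqN_def by simp
  then show ?thesis by (simp only: c3_coeff Sh_sq)
qed


lemma tri2: "2 * tri j = j * (j + 1)"
  by (induction j) (auto simp: algebra_simps)

lemma of_nat_bit: "(of_nat k :: bit) = (if odd k then 1 else 0)"
  by (induction k) auto

lemma mod5_pent: "(k*(3*k+1)) mod 5 = ((k mod 5)*(3*(k mod 5)+1)) mod 5" for k :: int
proof -
  define q where "q = k div 5"
  define r where "r = k mod 5"
  have k: "k = 5*q + r" unfolding q_def r_def by simp
  have "k*(3*k+1) = r*(3*r+1) + 5*(15*q*q+6*q*r+q)" unfolding k by (simp add: algebra_simps)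
  then have "(k*(3*k+1)) mod 5 = (r*(3*r+1)) mod 5" by (simp only: mod_mult_self2)
  then show ?thesis unfolding r_def .
qed
lemma mod5_tri: "(k*(k+1)) mod 5 = ((k mod 5)*((k mod 5)+1)) mod 5" for k :: int
proof -
  define q where "q = k div 5"
  define r where "r = k mod 5"
  have k: "k = 5*q + r" unfolding q_def r_def by simp
  have "k*(k+1) = r*(r+1) + 5*(5*q*q+2*q*r+q)" unfolding k by (simp add: algebra_simps)
  then have "(k*(k+1)) mod 5 = (r*(r+1)) mod 5" by (simp only: mod_mult_self2)
  then show ?thesis unfolding r_def .
qed

lemma r5_cases: "(r::int) = k mod 5 \<Longrightarrow> r = 0 \<or> r = 1 \<or> r = 2 \<or> r = 3 \<or> r = 4"
  by auto

lemma pent_res: "(k*(3*k+1)) mod 5 = (if k mod 5 = 0 then 0 else if k mod 5 = 1 then 4 else if k mod 5 = 2 then 4 else if k mod 5 = 3 then 0 else 2)" for k :: int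
  using r5_cases[of "k mod 5" k] mod5_pent[of k] by auto

lemma tri_res: "(k*(k+1)) mod 5 = (if k mod 5 = 0 then 0 else if k mod 5 = 1 then 2 else if k mod 5 = 2 then 1 else if k mod 5 = 3 then 2 else 0)" for k :: int
  using r5_cases[of "k mod 5" k] mod5_tri[of k] by auto

definition ApP :: "nat \<Rightarrow> bool" where "ApP m \<longleftrightarrow> (\<exists>j::nat. int m = int j * (3 * int j + 1))"
definition BpP :: "nat \<Rightarrow> bool" where "BpP m \<longleftrightarrow> (\<exists>j::nat. 1 \<le> j \<and> int m = int j * (3 * int j - 1))"
definition CpP :: "nat \<Rightarrow> bool" where "CpP m \<longleftrightarrow> (\<exists>t::nat. 2 * int m = int t * (int t + 1))"

lemma f1_eq: "2*(j*j + tri j) = j*(3*j+1)"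
  using tri2[of j] by (simp add: algebra_simps)
lemma f2_eq: "1 \<le> j \<Longrightarrow> int (2*((j-1)*j + tri j)) = int j * (3 * int j - 1)"
proof -
  assume "1 \<le> j"
  then have a: "int (j - 1) = int j - 1" by simp
  have b: "2 * int (tri j) = int j * (int j + 1)" by (induction j) (auto simp: algebra_simps)
  have "int (2*((j-1)*j + tri j)) = 2*(int (j-1) * int j) + 2 * int (tri j)" by simp
  also have "\<dots> = int j * (3 * int j - 1)" unfolding a b by (simp add: algebra_simps)
  finally show ?thesis .
qed

lemma A_iff: "(\<exists>j\<in>{0..m+1}. 2*(j*j + tri j) = m) \<longleftrightarrow> ApP m"
proof
  assume "\<exists>j\<in>{0..m+1}. 2*(j*j + tri j) = m"
  then obtain j where "2*(j*j + tri j) = m" by blast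
  then have "m = j*(3*j+1)" using f1_eq by simp
  then have "int m = int j * (3 * int j + 1)" by (simp add: algebra_simps)
  then show "ApP m" unfolding ApP_def by blast
next
  assume "ApP m"
  then obtain j where j: "int m = int j * (3 * int j + 1)" unfolding ApP_def by blast
  then have "int m = int (j*(3*j+1))" by (simp add: algebra_simps)
  then have m: "m = j*(3*j+1)" by (simp only: of_nat_eq_iff)
  then have "j \<le> m" by simp
  then show "\<exists>j\<in>{0..m+1}. 2*(j*j + tri j) = m" using m f1_eq by (intro bexI[of _ j]) auto
qed

lemma B_iff: "(\<exists>j\<in>{1..m+1}. 2*((j-1)*j + tri j) = m) \<longleftrightarrow> BpP m"
proof
  assume "\<exists>j\<in>{1..m+1}. 2*((j-1)*j + tri j) = m"
  then obtain j where "1 \<le> j" "2*((j-1)*j + tri j) = m" by auto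
  then show "BpP m" unfolding BpP_def using f2_eq by (intro exI[of _ j]) force
next
  assume "BpP m"
  then obtain j where j1: "1 \<le> j" and j: "int m = int j * (3 * int j - 1)" unfolding BpP_def by blast
  then have e: "int (2*((j-1)*j + tri j)) = int m" using f2_eq by simp
  then have m: "2*((j-1)*j + tri j) = m" by linarith
  have "j \<le> tri j" by (rule tri_ge)
  moreover have "tri j \<le> m" using m by simp
  ultimately have "j \<le> m" by linarith
  then show "\<exists>j\<in>{1..m+1}. 2*((j-1)*j + tri j) = m" using m j1 by (intro bexI[of _ j]) auto
qed

lemma C_iff: "(\<exists>t\<in>{0..m}. tri t = m) \<longleftrightarrow> CpP m"
proof
  assume "\<exists>t\<in>{0..m}. tri t = m"
  then obtain t where "tri t = m" by blast
  then have "2*m = t*(t+1)" using tri2[of t] by simp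
  then have "int (2*m) = int (t*(t+1))" by (simp only:)
  then have "2 * int m = int t * (int t + 1)" by (simp add: algebra_simps)
  then show "CpP m" unfolding CpP_def by blast
next
  assume "CpP m"
  then obtain t where "2 * int m = int t * (int t + 1)" unfolding CpP_def by blast
  then have "int (2*m) = int (t*(t+1))" by (simp add: algebra_simps)
  then have "2*m = t*(t+1)" by (simp only: of_nat_eq_iff)
  then have tm: "tri t = m" using tri2[of t] by simp
  then have "t \<le> m" using tri_ge[of t] by simp
  then show "\<exists>t\<in>{0..m}. tri t = m" using tm by auto
qed

lemma parity: "odd (c3 m) \<longleftrightarrow> ((ApP m \<noteq> BpP m) \<noteq> CpP m)"
proof -
  have i1: "inj_on (\<lambda>j. 2*(j*j + tri j)) A" for A
    by (rule incr_inj) (simp add: algebra_simps)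
  have i2: "inj_on (\<lambda>j. 2*((j-1)*j + tri j)) A" for A
  proof (rule incr_inj)
    fix j :: nat
    have "(j-1)*j \<le> (Suc j - 1) * Suc j" by (cases j) auto
    moreover have "tri j < tri (Suc j)" by simp
    ultimately have "(j-1)*j + tri j < (Suc j-1)*Suc j + tri (Suc j)" by (rule add_le_less_mono)
    then show "2*((j-1)*j + tri j) < 2*((Suc j-1)*Suc j + tri (Suc j))" by simp
  qed
  have i3: "inj_on tri A" for A by (rule incr_inj) simp
  have "(of_nat (c3 m) :: bit) = (if ApP m then 1 else 0) + (if BpP m then 1 else 0) + (if CpP m then 1 else 0)"
    unfolding main_coeff fps_add_nth
    by (simp only: coeff_sumX[OF i1 finite_atLeastAtMost] coeff_sumX[OF i2 finite_atLeastAtMost]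
        coeff_sumX[OF i3 finite_atLeastAtMost] A_iff B_iff C_iff)
  then have e: "(if odd (c3 m) then 1 else 0 :: bit) = (if ApP m then 1 else 0) + (if BpP m then 1 else 0) + (if CpP m then 1 else 0)"
    by (simp only: of_nat_bit)
  show ?thesis
  proof (cases "odd (c3 m)")
    case True
    then show ?thesis using e by (cases "ApP m"; cases "BpP m"; cases "CpP m") simp_all
  next
    case False
    then show ?thesis using e by (cases "ApP m"; cases "BpP m"; cases "CpP m") simp_all
  qed
qed


lemma pent_iff: "(ApP m \<or> BpP m) \<longleftrightarrow> (\<exists>k::int. int m = k*(3*k+1))"
proof
  assume "ApP m \<or> BpP m"
  then show "\<exists>k::int. int m = k*(3*k+1)"
  proof
    assume "ApP m" then show ?thesis unfolding ApP_def by blast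
  next
    assume "BpP m"
    then obtain j where j: "int m = int j * (3 * int j - 1)" unfolding BpP_def by blast
    then have "int m = (- int j) * (3 * (- int j) + 1)" by (simp add: algebra_simps)
    then show ?thesis by blast
  qed
next
  assume "\<exists>k::int. int m = k*(3*k+1)"
  then obtain k :: int where k: "int m = k*(3*k+1)" by blast
  show "ApP m \<or> BpP m"
  proof (cases "0 \<le> k")
    case True
    then have "int m = int (nat k) * (3 * int (nat k) + 1)" using k by simp
    then show ?thesis unfolding ApP_def by blast
  next
    case False
    then have "int (nat (-k)) = -k" "1 \<le> nat (-k)" by auto
    moreover have "int m = (-k) * (3 * (-k) - 1)" using k by (simp add: algebra_simps)
    ultimately have "int m = int (nat (-k)) * (3 * int (nat (-k)) - 1)" by simp
    then show ?thesis unfolding BpP_def using \<open>1 \<le> nat (-k)\<close> by blast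
  qed
qed

lemma notboth: "\<not> (ApP m \<and> BpP m)"
proof
  assume "ApP m \<and> BpP m"
  then obtain j j' :: nat where j: "int m = int j * (3 * int j + 1)" and j1: "1 \<le> j'"
    and j': "int m = int j' * (3 * int j' - 1)" unfolding ApP_def BpP_def by blast
  define a where "a = 6 * int j + 1"
  define b where "b = 6 * int j' - 1"
  have "a^2 = 12 * int m + 1" unfolding a_def j by (simp add: power2_eq_square algebra_simps)
  moreover have "b^2 = 12 * int m + 1" unfolding b_def j' by (simp add: power2_eq_square algebra_simps)
  ultimately have "a^2 = b^2" by simp
  moreover have "0 \<le> a" "0 \<le> b" unfolding a_def b_def using j1 by auto
  ultimately have "a = b" using power2_eq_iff_nonneg by blast
  then have "6 * (int j' - int j) = 2" unfolding a_def b_def by (simp add: algebra_simps)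
  then show False by presburger
qed

lemma odd_c3: "odd (c3 m) \<longleftrightarrow> ((\<exists>k::int. int m = k*(3*k+1)) \<noteq> CpP m)"
  using parity[of m] notboth[of m] pent_iff[of m] by blast

lemma pent_mod: "x = k*(3*k+1) \<Longrightarrow> x mod 5 = 0 \<or> x mod 5 = 2 \<or> x mod 5 = 4" for x k :: int
  using pent_res[of k] by (auto split: if_splits)

lemma tri_mod: "x = t*(t+1) \<Longrightarrow> x mod 5 = 0 \<or> x mod 5 = 1 \<or> x mod 5 = 2" for x t :: int
  using tri_res[of t] by (auto split: if_splits)

lemma part1: "odd (c3 (5*n+1)) \<longleftrightarrow>
            (\<exists>j::int. j \<ge> 1 \<and> (j mod 5 = 1 \<or> j mod 5 = 3) \<and> 10 * int n + 2 = j * (j + 1))"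
proof -
  have np: "\<not> (\<exists>k::int. int (5*n+1) = k*(3*k+1))"
  proof
    assume "\<exists>k::int. int (5*n+1) = k*(3*k+1)"
    then obtain k where "int (5*n+1) = k*(3*k+1)" by blast
    then have "int (5*n+1) mod 5 = 0 \<or> int (5*n+1) mod 5 = 2 \<or> int (5*n+1) mod 5 = 4" by (rule pent_mod)
    then show False by presburger
  qed
  have "odd (c3 (5*n+1)) \<longleftrightarrow> CpP (5*n+1)" using odd_c3[of "5*n+1"] np by blast
  also have "CpP (5*n+1) \<longleftrightarrow> (\<exists>j::int. j \<ge> 1 \<and> (j mod 5 = 1 \<or> j mod 5 = 3) \<and> 10 * int n + 2 = j * (j + 1))"
  proof
    assume "CpP (5*n+1)"
    then obtain t :: nat where t: "2 * int (5*n+1) = int t * (int t + 1)" unfolding CpP_def by blast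
    then have t': "10 * int n + 2 = int t * (int t + 1)" by simp
    have "t \<noteq> 0"
    proof
      assume "t = 0" with t' show False by simp
    qed
    then have "int t \<ge> 1" by simp
    moreover have "(int t * (int t + 1)) mod 5 = 2" unfolding t'[symmetric] by presburger
    then have "int t mod 5 = 1 \<or> int t mod 5 = 3" using tri_res[of "int t"] by (auto split: if_splits)
    ultimately show "\<exists>j::int. j \<ge> 1 \<and> (j mod 5 = 1 \<or> j mod 5 = 3) \<and> 10 * int n + 2 = j * (j + 1)"
      using t' by blast
  next
    assume "\<exists>j::int. j \<ge> 1 \<and> (j mod 5 = 1 \<or> j mod 5 = 3) \<and> 10 * int n + 2 = j * (j + 1)"
    then obtain j :: int where j: "j \<ge> 1" "10 * int n + 2 = j * (j + 1)" by blast
    then have "2 * int (5*n+1) = int (nat j) * (int (nat j) + 1)" by simp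
    then show "CpP (5*n+1)" unfolding CpP_def by blast
  qed
  finally show ?thesis .
qed

lemma part2: "odd (c3 (5*n+2)) \<longleftrightarrow> (\<exists>j::int. 5 * int n + 2 = (5*j+4) * (15*j+13))"
proof -
  have nc: "\<not> CpP (5*n+2)"
  proof
    assume "CpP (5*n+2)"
    then obtain t :: nat where "2 * int (5*n+2) = int t * (int t + 1)" unfolding CpP_def by blast
    then have "(2 * int (5*n+2)) mod 5 = 0 \<or> (2 * int (5*n+2)) mod 5 = 1 \<or> (2 * int (5*n+2)) mod 5 = 2"
      by (rule tri_mod)
    then show False by presburger
  qed
  have "odd (c3 (5*n+2)) \<longleftrightarrow> (\<exists>k::int. int (5*n+2) = k*(3*k+1))" using odd_c3[of "5*n+2"] nc by blast
  also have "\<dots> \<longleftrightarrow> (\<exists>j::int. 5 * int n + 2 = (5*j+4) * (15*j+13))"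
  proof
    assume "\<exists>k::int. int (5*n+2) = k*(3*k+1)"
    then obtain k :: int where k0: "int (5*n+2) = k*(3*k+1)" by blast
    then have k: "5 * int n + 2 = k*(3*k+1)" by simp
    have "(k*(3*k+1)) mod 5 = 2" unfolding k[symmetric] by presburger
    then have "k mod 5 = 4" using pent_res[of k] by (auto split: if_splits)
    then have kq: "k = 5 * (k div 5) + 4" by presburger
    define q where "q = k div 5"
    have "(5*q+4)*(15*q+13) = k*(3*k+1)" unfolding q_def by (subst (3 4) kq) (simp add: algebra_simps)
    then have "5 * int n + 2 = (5*q+4) * (15*q+13)" using k by simp
    then show "\<exists>j::int. 5 * int n + 2 = (5*j+4) * (15*j+13)" by blast
  next
    assume "\<exists>j::int. 5 * int n + 2 = (5*j+4) * (15*j+13)"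
    then obtain j :: int where j: "5 * int n + 2 = (5*j+4) * (15*j+13)" by blast
    then have "int (5*n+2) = (5*j+4)*(3*(5*j+4)+1)" by (simp add: algebra_simps)
    then show "\<exists>k::int. int (5*n+2) = k*(3*k+1)" by blast
  qed
  finally show ?thesis .
qed

lemma part3: "odd (c3 (5*n+3)) \<longleftrightarrow> (\<exists>j::int. j \<ge> 0 \<and> 10 * int n + 6 = (5*j+2) * (5*j+3))"
proof -
  have np: "\<not> (\<exists>k::int. int (5*n+3) = k*(3*k+1))"
  proof
    assume "\<exists>k::int. int (5*n+3) = k*(3*k+1)"
    then obtain k where "int (5*n+3) = k*(3*k+1)" by blast
    then have "int (5*n+3) mod 5 = 0 \<or> int (5*n+3) mod 5 = 2 \<or> int (5*n+3) mod 5 = 4" by (rule pent_mod)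
    then show False by presburger
  qed
  have "odd (c3 (5*n+3)) \<longleftrightarrow> CpP (5*n+3)" using odd_c3[of "5*n+3"] np by blast
  also have "CpP (5*n+3) \<longleftrightarrow> (\<exists>j::int. j \<ge> 0 \<and> 10 * int n + 6 = (5*j+2) * (5*j+3))"
  proof
    assume "CpP (5*n+3)"
    then obtain t :: nat where t: "2 * int (5*n+3) = int t * (int t + 1)" unfolding CpP_def by blast
    then have t': "10 * int n + 6 = int t * (int t + 1)" by simp
    have "(int t * (int t + 1)) mod 5 = 1" unfolding t'[symmetric] by presburger
    then have "int t mod 5 = 2" using tri_res[of "int t"] by (auto split: if_splits)
    then have e: "int t = 5 * (int t div 5) + 2" by presburger
    have "int t div 5 \<ge> 0" by simp
    moreover have "10 * int n + 6 = (5 * (int t div 5) + 2) * (5 * (int t div 5) + 3)"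
      using t' e by (metis add.assoc numeral_plus_one semiring_norm(5))
    ultimately show "\<exists>j::int. j \<ge> 0 \<and> 10 * int n + 6 = (5*j+2) * (5*j+3)" by blast
  next
    assume "\<exists>j::int. j \<ge> 0 \<and> 10 * int n + 6 = (5*j+2) * (5*j+3)"
    then obtain j :: int where j: "j \<ge> 0" "10 * int n + 6 = (5*j+2) * (5*j+3)" by blast
    have "int (nat (5*j+2)) = 5*j+2" using j by simp
    then have "2 * int (5*n+3) = int (nat (5*j+2)) * (int (nat (5*j+2)) + 1)"
      using j by (simp add: algebra_simps)
    then show "CpP (5*n+3)" unfolding CpP_def by blast
  qed
  finally show ?thesis .
qed

lemma part4: "odd (c3 (5*n+4)) \<longleftrightarrow> (\<exists>j::int. (j mod 5 = 1 \<or> j mod 5 = 2) \<and> 5 * int n + 4 = j * (3*j+1))"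
proof -
  have nc: "\<not> CpP (5*n+4)"
  proof
    assume "CpP (5*n+4)"
    then obtain t :: nat where "2 * int (5*n+4) = int t * (int t + 1)" unfolding CpP_def by blast
    then have "(2 * int (5*n+4)) mod 5 = 0 \<or> (2 * int (5*n+4)) mod 5 = 1 \<or> (2 * int (5*n+4)) mod 5 = 2"
      by (rule tri_mod)
    then show False by presburger
  qed
  have "odd (c3 (5*n+4)) \<longleftrightarrow> (\<exists>k::int. int (5*n+4) = k*(3*k+1))" using odd_c3[of "5*n+4"] nc by blast
  also have "\<dots> \<longleftrightarrow> (\<exists>j::int. (j mod 5 = 1 \<or> j mod 5 = 2) \<and> 5 * int n + 4 = j * (3*j+1))"
  proof
    assume "\<exists>k::int. int (5*n+4) = k*(3*k+1)"
    then obtain k :: int where k0: "int (5*n+4) = k*(3*k+1)" by blast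
    then have k: "5 * int n + 4 = k*(3*k+1)" by simp
    have "(k*(3*k+1)) mod 5 = 4" unfolding k[symmetric] by presburger
    then have "k mod 5 = 1 \<or> k mod 5 = 2" using pent_res[of k] by (auto split: if_splits)
    then show "\<exists>j::int. (j mod 5 = 1 \<or> j mod 5 = 2) \<and> 5 * int n + 4 = j * (3*j+1)" using k by blast
  next
    assume "\<exists>j::int. (j mod 5 = 1 \<or> j mod 5 = 2) \<and> 5 * int n + 4 = j * (3*j+1)"
    then show "\<exists>k::int. int (5*n+4) = k*(3*k+1)" by auto
  qed
  finally show ?thesis .
qed

theorem theorem3:
  fixes n :: nat
  shows "(odd (c3 (5*n+1)) \<longleftrightarrow>
            (\<exists>j::int. j \<ge> 1 \<and> (j mod 5 = 1 \<or> j mod 5 = 3) \<and> 10 * int n + 2 = j * (j + 1)))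
       \<and> (odd (c3 (5*n+2)) \<longleftrightarrow>
            (\<exists>j::int. 5 * int n + 2 = (5*j+4) * (15*j+13)))
       \<and> (odd (c3 (5*n+3)) \<longleftrightarrow>
            (\<exists>j::int. j \<ge> 0 \<and> 10 * int n + 6 = (5*j+2) * (5*j+3)))
       \<and> (odd (c3 (5*n+4)) \<longleftrightarrow>
            (\<exists>j::int. (j mod 5 = 1 \<or> j mod 5 = 2) \<and> 5 * int n + 4 = j * (3*j+1)))"
  using part1 part2 part3 part4 by blast


end
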